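(* Let $H$ be a Hilbert space and let $A_1,\dots,A_n$ and $B_1,\dots,B_n$ be strictly positive bounded operators on $H$ with $\sum_{j=1}^n A_j=\sum_{j=1}^n B_j=I$. Then $$0\ \ge\ \sum_{j=1}^n A_j^{1/2}\left(\log A_j^{-1/2}B_jA_j^{-1/2}\right)A_j^{1/2}\ \ge\ -\log\Big[\sum_{j=1}^n A_jB_j^{-1}A_j\Big]$$ in the operator order.
   Context: A bounded operator $T$ on $H$ is positive ($T\ge 0$) if $(Tx,x)\ge 0$ for all $x\in H$, and strictly positive ($T>0$) if it is positive and invertible; $X\le Y$ means $Y-X\ge 0$. $I$ is the identity operator; $\log$ and powers of strictly positive operators are defined by continuous functional calculus. *)

theory Defs
  imports "HOL-Analysis.Analysis" "HOL-Computational_Algebra.Polynomial"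
begin

text \<open>Hilbert space: a complete real inner product space 'a.
  Bounded operators: blinfun from 'a to 'a, product = composition.\<close>

definition op_selfadjoint :: "('a::real_inner \<Rightarrow>\<^sub>L 'a) \<Rightarrow> bool" where
  "op_selfadjoint T \<longleftrightarrow> (\<forall>x y. inner (T x) y = inner x (T y))"

text \<open>Positive operator: (Tx,x) \<ge> 0 for all x (plus symmetry, automatic over the complex field).\<close>
definition op_pos :: "('a::real_inner \<Rightarrow>\<^sub>L 'a) \<Rightarrow> bool" where
  "op_pos T \<longleftrightarrow> op_selfadjoint T \<and> (\<forall>x. 0 \<le> inner (T x) x)"

definition op_le :: "('a::real_inner \<Rightarrow>\<^sub>L 'a) \<Rightarrow> ('a \<Rightarrow>\<^sub>L 'a) \<Rightarrow> bool" where
  "op_le X Y \<longleftrightarrow> op_pos (Y - X)"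

definition op_invertible :: "('a::real_normed_vector \<Rightarrow>\<^sub>L 'a) \<Rightarrow> bool" where
  "op_invertible T \<longleftrightarrow> (\<exists>S. S o\<^sub>L T = id_blinfun \<and> T o\<^sub>L S = id_blinfun)"

definition op_inv :: "('a::real_normed_vector \<Rightarrow>\<^sub>L 'a) \<Rightarrow> ('a \<Rightarrow>\<^sub>L 'a)" where
  "op_inv T = (THE S. S o\<^sub>L T = id_blinfun \<and> T o\<^sub>L S = id_blinfun)"

definition op_strictly_pos :: "('a::real_inner \<Rightarrow>\<^sub>L 'a) \<Rightarrow> bool" where
  "op_strictly_pos T \<longleftrightarrow> op_pos T \<and> op_invertible T"

definition op_spectrum :: "('a::real_normed_vector \<Rightarrow>\<^sub>L 'a) \<Rightarrow> real set" where
  "op_spectrum T = {l. \<not> op_invertible (T - l *\<^sub>R id_blinfun)}"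

definition op_power :: "('a::real_normed_vector \<Rightarrow>\<^sub>L 'a) \<Rightarrow> nat \<Rightarrow> ('a \<Rightarrow>\<^sub>L 'a)" where
  "op_power T k = ((\<lambda>S. T o\<^sub>L S) ^^ k) id_blinfun"

definition op_poly :: "real poly \<Rightarrow> ('a::real_normed_vector \<Rightarrow>\<^sub>L 'a) \<Rightarrow> ('a \<Rightarrow>\<^sub>L 'a)" where
  "op_poly p T = (\<Sum>i\<le>degree p. coeff p i *\<^sub>R op_power T i)"

definition op_fc :: "(real \<Rightarrow> real) \<Rightarrow> ('a::real_normed_vector \<Rightarrow>\<^sub>L 'a) \<Rightarrow> ('a \<Rightarrow>\<^sub>L 'a)" where
  "op_fc f T = (THE S. \<forall>P :: nat \<Rightarrow> real poly.
      uniform_limit (op_spectrum T) (\<lambda>k x. poly (P k) x) f sequentially \<longrightarrow>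
      ((\<lambda>k. op_poly (P k) T) \<longlonglongrightarrow> S))"

end

theory Submission
  imports Defs "HOL-Computational_Algebra.Fundamental_Theorem_Algebra"
begin

lemmas opsimps = blinfun_apply_blinfun_compose blinfun.add_left blinfun.diff_left
  blinfun.scaleR_left blinfun.sum_left blinfun.minus_left blinfun.zero_left
  blinfun.add_right blinfun.diff_right blinfun.scaleR_right blinfun.minus_right blinfun.zero_right

lemma oc_assoc: "(A o\<^sub>L B) o\<^sub>L C = A o\<^sub>L (B o\<^sub>L C)"
  by (rule blinfun_eqI) simp
lemma oc_add_left: "(A + B) o\<^sub>L C = (A o\<^sub>L C) + (B o\<^sub>L C)"
  by (rule blinfun_eqI) (simp add: opsimps)
lemma oc_add_right: "C o\<^sub>L (A + B) = (C o\<^sub>L A) + (C o\<^sub>L B)"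
  by (rule blinfun_eqI) (simp add: opsimps)
lemma oc_diff_left: "(A - B) o\<^sub>L C = (A o\<^sub>L C) - (B o\<^sub>L C)"
  by (rule blinfun_eqI) (simp add: opsimps)
lemma oc_diff_right: "C o\<^sub>L (A - B) = (C o\<^sub>L A) - (C o\<^sub>L B)"
  by (rule blinfun_eqI) (simp add: opsimps)
lemma oc_minus_left: "(- A) o\<^sub>L C = - (A o\<^sub>L C)"
  by (rule blinfun_eqI) (simp add: opsimps)
lemma oc_minus_right: "C o\<^sub>L (- A) = - (C o\<^sub>L A)"
  by (rule blinfun_eqI) (simp add: opsimps)
lemma oc_scale_left: "(r *\<^sub>R A) o\<^sub>L C = r *\<^sub>R (A o\<^sub>L C)"
  by (rule blinfun_eqI) (simp add: opsimps)
lemma oc_scale_right: "C o\<^sub>L (r *\<^sub>R A) = r *\<^sub>R (C o\<^sub>L A)"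
  by (rule blinfun_eqI) (simp add: opsimps)
lemma oc_sum_left: "(\<Sum>i\<in>S. A i) o\<^sub>L C = (\<Sum>i\<in>S. A i o\<^sub>L C)"
  by (rule blinfun_eqI) (simp add: opsimps)
lemma oc_sum_right: "C o\<^sub>L (\<Sum>i\<in>S. A i) = (\<Sum>i\<in>S. C o\<^sub>L A i)"
  by (induct S rule: infinite_finite_induct) (auto simp: oc_add_right)
lemma oc_id_left[simp]: "id_blinfun o\<^sub>L A = A"
  by (rule blinfun_eqI) simp
lemma oc_id_right[simp]: "A o\<^sub>L id_blinfun = A"
  by (rule blinfun_eqI) simp
lemma oc_zero_left[simp]: "0 o\<^sub>L A = 0"
  by (rule blinfun_eqI) simp
lemma oc_zero_right[simp]: "A o\<^sub>L 0 = 0"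
  by (rule blinfun_eqI) simp

lemmas ocsimps = oc_add_left oc_add_right oc_diff_left oc_diff_right oc_minus_left oc_minus_right
  oc_scale_left oc_scale_right

subsection \<open>Self-adjointness and order\<close>

lemma sa_0[simp]: "op_selfadjoint 0"
  by (simp add: op_selfadjoint_def)
lemma sa_id[simp]: "op_selfadjoint id_blinfun"
  by (simp add: op_selfadjoint_def)
lemma sa_add: "op_selfadjoint S \<Longrightarrow> op_selfadjoint T \<Longrightarrow> op_selfadjoint (S + T)"
  by (simp add: op_selfadjoint_def opsimps inner_add_left inner_add_right)
lemma sa_diff: "op_selfadjoint S \<Longrightarrow> op_selfadjoint T \<Longrightarrow> op_selfadjoint (S - T)"
  by (simp add: op_selfadjoint_def opsimps inner_diff_left inner_diff_right)
lemma sa_uminus: "op_selfadjoint S \<Longrightarrow> op_selfadjoint (- S)"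
  by (simp add: op_selfadjoint_def opsimps)
lemma sa_scale: "op_selfadjoint S \<Longrightarrow> op_selfadjoint (r *\<^sub>R S)"
  by (simp add: op_selfadjoint_def opsimps)
lemma sa_sum: "(\<And>i. i \<in> J \<Longrightarrow> op_selfadjoint (S i)) \<Longrightarrow> op_selfadjoint (\<Sum>i\<in>J. S i)"
  by (induct J rule: infinite_finite_induct) (auto intro: sa_add)
lemma sa_comm: "op_selfadjoint S \<Longrightarrow> op_selfadjoint T \<Longrightarrow> S o\<^sub>L T = T o\<^sub>L S \<Longrightarrow> op_selfadjoint (S o\<^sub>L T)"
  unfolding op_selfadjoint_def
proof (intro allI)
  fix x y
  assume a: "\<forall>x y. inner (S x) y = inner x (S y)" "\<forall>x y. inner (T x) y = inner x (T y)"
     "S o\<^sub>L T = T o\<^sub>L S"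
  have "inner ((S o\<^sub>L T) x) y = inner x (T (S y))" using a(1,2) by simp
  also have "\<dots> = inner x ((T o\<^sub>L S) y)" by simp
  finally show "inner ((S o\<^sub>L T) x) y = inner x ((S o\<^sub>L T) y)" using a(3) by simp
qed
lemma sa_sandwich: "op_selfadjoint C \<Longrightarrow> op_selfadjoint X \<Longrightarrow> op_selfadjoint ((C o\<^sub>L X) o\<^sub>L C)"
  by (simp add: op_selfadjoint_def)

lemma pos_sandwich: "op_selfadjoint C \<Longrightarrow> op_pos X \<Longrightarrow> op_pos ((C o\<^sub>L X) o\<^sub>L C)"
  unfolding op_pos_def using sa_sandwich by (simp add: op_selfadjoint_def) (metis)

lemma op_le_iff: "op_le X Y \<longleftrightarrow> op_selfadjoint (Y - X) \<and> (\<forall>x. inner (X x) x \<le> inner (Y x) x)"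
  by (simp add: op_le_def op_pos_def opsimps inner_diff_left)

lemma op_le_trans: "op_le X Y \<Longrightarrow> op_le Y Z \<Longrightarrow> op_le X Z"
proof -
  assume "op_le X Y" "op_le Y Z"
  then have "op_selfadjoint ((Z - Y) + (Y - X))" by (intro sa_add) (simp_all add: op_le_iff)
  moreover have "(Z - Y) + (Y - X) = Z - X" by simp
  ultimately have "op_selfadjoint (Z - X)" by simp
  then show ?thesis using \<open>op_le X Y\<close> \<open>op_le Y Z\<close> unfolding op_le_iff by (metis order_trans)
qed
lemma op_le_refl: "op_le X X"
  by (simp add: op_le_iff)
lemma op_le_add: "op_le X Y \<Longrightarrow> op_le X' Y' \<Longrightarrow> op_le (X + X') (Y + Y')"
proof -
  assume a: "op_le X Y" "op_le X' Y'"
  have eq: "(Y + Y') - (X + X') = (Y - X) + (Y' - X')" by simp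
  have "op_selfadjoint ((Y + Y') - (X + X'))" unfolding eq using a by (intro sa_add) (simp_all add: op_le_iff)
  then show ?thesis using a unfolding op_le_iff by (auto simp: opsimps inner_add_left intro: add_mono)
qed
lemma op_le_sum: "(\<And>i. i \<in> J \<Longrightarrow> op_le (X i) (Y i)) \<Longrightarrow> op_le (\<Sum>i\<in>J. X i) (\<Sum>i\<in>J. Y i)"
  by (induct J rule: infinite_finite_induct) (auto intro: op_le_add op_le_refl)
lemma op_le_scale: "op_le X Y \<Longrightarrow> 0 \<le> r \<Longrightarrow> op_le (r *\<^sub>R X) (r *\<^sub>R Y)"
proof -
  assume a: "op_le X Y" "0 \<le> r"
  have "r *\<^sub>R Y - r *\<^sub>R X = r *\<^sub>R (Y - X)" by (simp add: scaleR_diff_right)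
  then show ?thesis using a unfolding op_le_iff by (auto simp: opsimps intro: mult_left_mono sa_scale)
qed
lemma op_le_neg: "op_le X Y \<Longrightarrow> op_le (- Y) (- X)"
  unfolding op_le_iff by (simp add: opsimps)
lemma op_le_sandwich: "op_selfadjoint C \<Longrightarrow> op_le X Y \<Longrightarrow> op_le ((C o\<^sub>L X) o\<^sub>L C) ((C o\<^sub>L Y) o\<^sub>L C)"
proof -
  assume a: "op_selfadjoint C" "op_le X Y"
  have "((C o\<^sub>L Y) o\<^sub>L C) - ((C o\<^sub>L X) o\<^sub>L C) = (C o\<^sub>L (Y - X)) o\<^sub>L C"
    by (simp add: ocsimps)
  then show ?thesis using a pos_sandwich unfolding op_le_def by metis
qed

lemma op_le_lim:
  assumes X: "X \<longlonglongrightarrow> L" and Y: "Y \<longlonglongrightarrow> M" and le: "\<And>n. op_le (X n) (Y n)"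
  shows "op_le L M"
  unfolding op_le_iff op_selfadjoint_def
proof (intro conjI allI)
  fix x y
  have "(\<lambda>n. inner ((Y n - X n) x) y) \<longlonglongrightarrow> inner ((M - L) x) y"
    by (intro tendsto_intros blinfun.tendsto X Y)
  moreover have "(\<lambda>n. inner ((Y n - X n) x) y) \<longlonglongrightarrow> inner x ((M - L) y)"
  proof -
    have "(\<lambda>n. inner x ((Y n - X n) y)) \<longlonglongrightarrow> inner x ((M - L) y)"
      by (intro tendsto_intros blinfun.tendsto X Y)
    moreover have "inner ((Y n - X n) x) y = inner x ((Y n - X n) y)" for n
      using le[of n] unfolding op_le_iff op_selfadjoint_def by blast
    ultimately show ?thesis by simp
  qed
  ultimately show "inner ((M - L) x) y = inner x ((M - L) y)" using LIMSEQ_unique by blast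
next
  fix x
  have "(\<lambda>n. inner (X n x) x) \<longlonglongrightarrow> inner (L x) x"
    by (intro tendsto_intros blinfun.tendsto X)
  moreover have "(\<lambda>n. inner (Y n x) x) \<longlonglongrightarrow> inner (M x) x"
    by (intro tendsto_intros blinfun.tendsto Y)
  ultimately show "inner (L x) x \<le> inner (M x) x"
    by (rule LIMSEQ_le) (use le in \<open>auto simp: op_le_iff\<close>)
qed

lemmas oc_tendsto = bounded_bilinear.tendsto[OF bounded_bilinear_blinfun_compose]

subsection \<open>Inverses\<close>

lemma inv_unique_aux: "S o\<^sub>L T = id_blinfun \<Longrightarrow> T o\<^sub>L S' = id_blinfun \<Longrightarrow> S = S'"
  by (metis oc_assoc oc_id_left oc_id_right)

lemma op_inv_eq: "S o\<^sub>L T = id_blinfun \<Longrightarrow> T o\<^sub>L S = id_blinfun \<Longrightarrow> op_inv T = S"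
  unfolding op_inv_def by (rule the_equality) (auto dest: inv_unique_aux)

lemma op_invertibleI: "S o\<^sub>L T = id_blinfun \<Longrightarrow> T o\<^sub>L S = id_blinfun \<Longrightarrow> op_invertible T"
  unfolding op_invertible_def by blast

lemma op_inv_props:
  assumes "op_invertible T"
  shows "op_inv T o\<^sub>L T = id_blinfun" "T o\<^sub>L op_inv T = id_blinfun"
proof -
  obtain S where "S o\<^sub>L T = id_blinfun" "T o\<^sub>L S = id_blinfun" using assms unfolding op_invertible_def by blast
  then show "op_inv T o\<^sub>L T = id_blinfun" "T o\<^sub>L op_inv T = id_blinfun" using op_inv_eq by metis+
qed

lemma op_inv_apply:
  assumes "op_invertible T"
  shows "op_inv T (T x) = x" "T (op_inv T x) = x"
  using op_inv_props[OF assms] by (metis blinfun_apply_blinfun_compose blinfun_apply_id_blinfun)+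

lemma invertible_comp: "op_invertible S \<Longrightarrow> op_invertible T \<Longrightarrow> op_invertible (S o\<^sub>L T)"
proof -
  assume a: "op_invertible S" "op_invertible T"
  show ?thesis
  proof (rule op_invertibleI[of "op_inv T o\<^sub>L op_inv S"])
    show "(op_inv T o\<^sub>L op_inv S) o\<^sub>L (S o\<^sub>L T) = id_blinfun"
      by (rule blinfun_eqI) (simp add: op_inv_apply a)
    show "(S o\<^sub>L T) o\<^sub>L (op_inv T o\<^sub>L op_inv S) = id_blinfun"
      by (rule blinfun_eqI) (simp add: op_inv_apply a)
  qed
qed

lemma invertible_scale: "c \<noteq> 0 \<Longrightarrow> op_invertible T \<Longrightarrow> op_invertible (c *\<^sub>R T)"
proof -
  assume a: "c \<noteq> 0" "op_invertible T"
  show ?thesis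
  proof (rule op_invertibleI[of "(1/c) *\<^sub>R op_inv T"])
    show "((1/c) *\<^sub>R op_inv T) o\<^sub>L (c *\<^sub>R T) = id_blinfun"
      by (rule blinfun_eqI) (simp add: op_inv_apply a opsimps)
    show "(c *\<^sub>R T) o\<^sub>L ((1/c) *\<^sub>R op_inv T) = id_blinfun"
      by (rule blinfun_eqI) (simp add: op_inv_apply a opsimps)
  qed
qed

lemma invertible_uminus: "op_invertible T \<Longrightarrow> op_invertible (- T)"
proof -
  assume a: "op_invertible T"
  show ?thesis
  proof (rule op_invertibleI[of "- op_inv T"])
    show "(- op_inv T) o\<^sub>L (- T) = id_blinfun"
      by (rule blinfun_eqI) (simp add: op_inv_apply a opsimps)
    show "(- T) o\<^sub>L (- op_inv T) = id_blinfun"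
      by (rule blinfun_eqI) (simp add: op_inv_apply a opsimps)
  qed
qed

lemma invertible_id[simp]: "op_invertible id_blinfun"
  by (rule op_invertibleI[of id_blinfun]) simp_all

lemma op_inv_id[simp]: "op_inv id_blinfun = id_blinfun"
  by (rule op_inv_eq) simp_all

lemma invertible_inv: "op_invertible T \<Longrightarrow> op_invertible (op_inv T)"
  using op_inv_props op_invertibleI by metis

lemma inv_inv: "op_invertible T \<Longrightarrow> op_inv (op_inv T) = T"
  using op_inv_props op_inv_eq by metis

lemma sa_inv:
  fixes T :: "'a::real_inner \<Rightarrow>\<^sub>L 'a"
  assumes "op_selfadjoint T" "op_invertible T"
  shows "op_selfadjoint (op_inv T)"
  unfolding op_selfadjoint_def
proof (intro allI)
  fix x y
  have "inner (op_inv T x) y = inner (op_inv T x) (T (op_inv T y))" by (simp add: op_inv_apply assms)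
  also have "\<dots> = inner (T (op_inv T x)) (op_inv T y)" using assms(1) unfolding op_selfadjoint_def by simp
  also have "\<dots> = inner x (op_inv T y)" by (simp add: op_inv_apply assms)
  finally show "inner (op_inv T x) y = inner x (op_inv T y)" .
qed

lemma triv_op: "(\<forall>x::'a::real_normed_vector. x = 0) \<Longrightarrow> (T::'a \<Rightarrow>\<^sub>L 'a) = 0"
  by (rule blinfun_eqI) simp

lemma triv_invertible: "(\<forall>x::'a::real_normed_vector. x = 0) \<Longrightarrow> op_invertible (T::'a \<Rightarrow>\<^sub>L 'a)"
  by (rule op_invertibleI[of 0]) (metis triv_op)+

subsection \<open>Norm estimates\<close>

lemma inner_op_le_norm:
  fixes S :: "'a::real_inner \<Rightarrow>\<^sub>L 'a"
  shows "\<bar>inner (S x) x\<bar> \<le> norm S * (norm x)^2"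
proof -
  have "\<bar>inner (S x) x\<bar> \<le> norm (S x) * norm x" by (rule Cauchy_Schwarz_ineq2)
  also have "\<dots> \<le> norm S * norm x * norm x" by (intro mult_right_mono norm_blinfun) simp
  finally show ?thesis by (simp add: power2_eq_square mult.assoc)
qed

lemma sa_norm_le:
  fixes S :: "'a::real_inner \<Rightarrow>\<^sub>L 'a"
  assumes sa: "op_selfadjoint S" and K: "0 \<le> K" and b: "\<And>x. \<bar>inner (S x) x\<bar> \<le> K * (norm x)^2"
  shows "norm S \<le> K"
proof (rule norm_blinfun_bound[OF K])
  fix x
  show "norm (S x) \<le> K * norm x"
  proof (cases "S x = 0")
    case True then show ?thesis using K by simp
  next
    case False
    then have nx: "norm x > 0" by (metis blinfun.zero_right zero_less_norm_iff)
    have nsx: "norm (S x) > 0" using False by simp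
    define y where "y = (norm x / norm (S x)) *\<^sub>R S x"
    have ny: "norm y = norm x" using nsx by (simp add: y_def)
    have iy: "inner (S x) y = norm x * norm (S x)"
      using nsx by (simp add: y_def power2_norm_eq_inner[symmetric] power2_eq_square)
    have sym: "inner (S y) x = inner (S x) y"
      using sa unfolding op_selfadjoint_def by (metis inner_commute)
    have "4 * inner (S x) y = inner (S (x+y)) (x+y) - inner (S (x-y)) (x-y)"
      using sym by (simp add: opsimps inner_add_left inner_add_right inner_diff_left inner_diff_right)
    also have "\<dots> \<le> K * (norm (x+y))^2 + K * (norm (x-y))^2"
      using b[of "x+y"] b[of "x-y"] by linarith
    also have "\<dots> = 2 * K * ((norm x)^2 + (norm y)^2)"
      by (simp add: power2_norm_eq_inner inner_add_left inner_add_right inner_diff_left inner_diff_right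
          inner_commute algebra_simps)
    finally have "4 * (norm x * norm (S x)) \<le> 4 * K * (norm x * norm x)"
      using iy ny by (simp add: power2_eq_square)
    then have "norm x * norm (S x) \<le> norm x * (K * norm x)" by (simp add: algebra_simps)
    then show ?thesis using nx by (simp add: mult_le_cancel_left_pos)
  qed
qed

lemma quad_disc:
  fixes a b c :: real
  assumes "0 \<le> a" "0 \<le> c" "\<And>t. 0 \<le> a + 2*b*t + c*t^2"
  shows "b^2 \<le> a*c"
proof (cases "c = 0")
  case True
  show ?thesis
  proof (cases "b = 0")
    case False
    have "0 \<le> a + 2*b*(-(a+1)/(2*b)) + c*(-(a+1)/(2*b))^2" by (rule assms(3))
    then have False using False True by (simp add: field_simps)
    then show ?thesis ..
  qed (use assms in simp)
next
  case False
  then have c: "c > 0" using assms(2) by simp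
  have "0 \<le> a + 2*b*(-b/c) + c*(-b/c)^2" by (rule assms(3))
  then have "0 \<le> a - b^2/c" using c by (simp add: power2_eq_square field_simps)
  then show ?thesis using c by (simp add: field_simps)
qed

lemma pos_cs:
  fixes P :: "'a::real_inner \<Rightarrow>\<^sub>L 'a"
  assumes "op_pos P"
  shows "(inner (P x) y)^2 \<le> inner (P x) x * inner (P y) y"
proof (rule quad_disc)
  have sa: "inner (P y) x = inner (P x) y" using assms unfolding op_pos_def op_selfadjoint_def
    by (metis inner_commute)
  show "0 \<le> inner (P x) x" "0 \<le> inner (P y) y" using assms unfolding op_pos_def by auto
  fix t
  have "0 \<le> inner (P (x + t *\<^sub>R y)) (x + t *\<^sub>R y)" using assms unfolding op_pos_def by auto
  also have "\<dots> = inner (P x) x + 2 * inner (P x) y * t + inner (P y) y * t^2"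
    using sa by (simp add: opsimps inner_add_left inner_add_right algebra_simps power2_eq_square)
  finally show "0 \<le> inner (P x) x + 2 * inner (P x) y * t + inner (P y) y * t^2" .
qed

lemma pos_inv_qlb:
  fixes P :: "'a::real_inner \<Rightarrow>\<^sub>L 'a"
  assumes pos: "op_pos P" and inv: "op_invertible P"
  shows "\<exists>c>0. \<forall>x. c * (norm x)^2 \<le> inner (P x) x"
proof -
  define k where "k = (norm (op_inv P))^2 * norm P"
  have k0: "0 \<le> k" by (simp add: k_def)
  have "(1/(k+1)) * (norm x)^2 \<le> inner (P x) x" for x
  proof -
    define q where "q = inner (P x) x"
    have q0: "0 \<le> q" using pos unfolding op_pos_def q_def by auto
    have pxq: "(norm (P x))^2 \<le> norm P * q"
    proof (cases "P x = 0")
      case True then show ?thesis using q0 by simp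
    next
      case False
      have "(inner (P x) (P x))^2 \<le> q * inner (P (P x)) (P x)"
        using pos_cs[OF pos, of x "P x"] by (simp add: q_def)
      also have "\<dots> \<le> q * (norm P * (norm (P x))^2)"
        using inner_op_le_norm[of P "P x"] q0 by (intro mult_left_mono) auto
      finally have "(norm (P x))^2 * (norm (P x))^2 \<le> (norm P * q) * (norm (P x))^2"
        by (simp add: power2_norm_eq_inner[symmetric] algebra_simps)
      then show ?thesis by (rule mult_right_le_imp_le) (use False in simp)
    qed
    have "norm x = norm (op_inv P (P x))" by (simp add: op_inv_apply inv)
    also have "\<dots> \<le> norm (op_inv P) * norm (P x)" by (rule norm_blinfun)
    finally have "(norm x)^2 \<le> (norm (op_inv P))^2 * (norm (P x))^2"
      by (metis norm_ge_zero power_mono power_mult_distrib)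
    also have "\<dots> \<le> (norm (op_inv P))^2 * (norm P * q)" using pxq by (simp add: mult_left_mono)
    also have "\<dots> = k * q" by (simp add: k_def)
    also have "\<dots> \<le> (k + 1) * q" using q0 by (simp add: algebra_simps)
    finally show ?thesis using k0 by (simp add: q_def field_simps)
  qed
  moreover have "1/(k+1) > 0" using k0 by simp
  ultimately show ?thesis by blast
qed

subsection \<open>Neumann series\<close>

lemma op_power_Suc: "op_power R (Suc n) = R o\<^sub>L op_power R n"
  by (simp add: op_power_def)
lemma op_power_0[simp]: "op_power R 0 = id_blinfun"
  by (simp add: op_power_def)
lemma op_power_comm: "op_power R n o\<^sub>L R = R o\<^sub>L op_power R n"
  by (induct n) (simp_all add: op_power_Suc oc_assoc)
lemma op_power_norm: "norm (op_power R n) \<le> (norm R)^n"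
proof (induct n)
  case 0 then show ?case by (simp add: norm_blinfun_id_le)
next
  case (Suc n)
  have "norm (op_power R (Suc n)) \<le> norm R * norm (op_power R n)"
    by (simp add: op_power_Suc norm_blinfun_compose)
  also have "\<dots> \<le> norm R * (norm R)^n" using Suc by (simp add: mult_left_mono)
  finally show ?case by simp
qed


lemma blinfun_Cauchy_convergent:
  fixes X::"nat \<Rightarrow> 'a::real_normed_vector \<Rightarrow>\<^sub>L 'b::{real_normed_vector,complete_space}"
  assumes "Cauchy X"
  shows "convergent X"
proof -
  {
    fix x::'a
    {
      fix x::'a
      assume "norm x \<le> 1"
      have "Cauchy (\<lambda>n. X n x)"
      proof (rule CauchyI)
        fix e::real
        assume "0 < e"
        from CauchyD[OF \<open>Cauchy X\<close> \<open>0 < e\<close>] obtain M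
          where M: "\<And>m n. m \<ge> M \<Longrightarrow> n \<ge> M \<Longrightarrow> norm (X m - X n) < e"
          by auto
        show "\<exists>M. \<forall>m\<ge>M. \<forall>n\<ge>M. norm (X m x - X n x) < e"
        proof (safe intro!: exI[where x=M])
          fix m n
          assume le: "M \<le> m" "M \<le> n"
          have "norm (X m x - X n x) = norm ((X m - X n) x)"
            by (simp add: blinfun.bilinear_simps)
          also have "\<dots> \<le> norm (X m - X n) * norm x"
             by (rule norm_blinfun)
          also have "\<dots> \<le> norm (X m - X n) * 1"
            using \<open>norm x \<le> 1\<close> norm_ge_zero by (rule mult_left_mono)
          also have "\<dots> = norm (X m - X n)" by simp
          also have "\<dots> < e" using le M by blast
          finally show "norm (X m x - X n x) < e" .
        qed
      qed
      hence "convergent (\<lambda>n. X n x)"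
        by (metis Cauchy_convergent_iff)
    } note convergent_norm1 = this
    define y where "y = x /\<^sub>R norm x"
    have y: "norm y \<le> 1" and xy: "x = norm x *\<^sub>R y"
      by (simp_all add: y_def inverse_eq_divide)
    have "convergent (\<lambda>n. norm x *\<^sub>R X n y)"
      by (intro bounded_bilinear.convergent[OF bounded_bilinear_scaleR] convergent_const
        convergent_norm1 y)
    also have "(\<lambda>n. norm x *\<^sub>R X n y) = (\<lambda>n. X n x)"
      by (subst xy) (simp add: blinfun.bilinear_simps)
    finally have "convergent (\<lambda>n. X n x)" .
  }
  then obtain v where v: "\<And>x. (\<lambda>n. X n x) \<longlonglongrightarrow> v x"
    unfolding convergent_def
    by metis
  have "Cauchy (\<lambda>n. norm (X n))"
  proof (rule CauchyI)
    fix e::real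
    assume "e > 0"
    from CauchyD[OF \<open>Cauchy X\<close> \<open>0 < e\<close>] obtain M
      where M: "\<And>m n. m \<ge> M \<Longrightarrow> n \<ge> M \<Longrightarrow> norm (X m - X n) < e"
      by auto
    show "\<exists>M. \<forall>m\<ge>M. \<forall>n\<ge>M. norm (norm (X m) - norm (X n)) < e"
    proof (safe intro!: exI[where x=M])
      fix m n assume mn: "m \<ge> M" "n \<ge> M"
      have "norm (norm (X m) - norm (X n)) \<le> norm (X m - X n)"
        by (metis norm_triangle_ineq3 real_norm_def)
      also have "\<dots> < e" using mn M by blast
      finally show "norm (norm (X m) - norm (X n)) < e" .
    qed
  qed
  then obtain K where K: "(\<lambda>n. norm (X n)) \<longlonglongrightarrow> K"
    unfolding Cauchy_convergent_iff convergent_def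
    by metis
  have "bounded_linear v"
  proof
    fix x y and r::real
    from tendsto_add[OF v[of x] v [of y]] v[of "x + y", unfolded blinfun.bilinear_simps]
      tendsto_scaleR[OF tendsto_const[of r] v[of x]] v[of "r *\<^sub>R x", unfolded blinfun.bilinear_simps]
    show "v (x + y) = v x + v y" "v (r *\<^sub>R x) = r *\<^sub>R v x"
      by (metis (poly_guards_query) LIMSEQ_unique)+
    show "\<exists>K. \<forall>x. norm (v x) \<le> norm x * K"
    proof (safe intro!: exI[where x=K])
      fix x
      have "norm (v x) \<le> K * norm x"
        by (rule tendsto_le[OF _ tendsto_mult[OF K tendsto_const] tendsto_norm[OF v]])
          (auto simp: norm_blinfun)
      thus "norm (v x) \<le> norm x * K"
        by (simp add: ac_simps)
    qed
  qed
  hence Bv: "\<And>x. (\<lambda>n. X n x) \<longlonglongrightarrow> Blinfun v x"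
    by (auto simp: bounded_linear_Blinfun_apply v)
  have "X \<longlonglongrightarrow> Blinfun v"
  proof (rule LIMSEQ_I)
    fix r::real assume "r > 0"
    define r' where "r' = r / 2"
    have "0 < r'" "r' < r" using \<open>r > 0\<close> by (simp_all add: r'_def)
    from CauchyD[OF \<open>Cauchy X\<close> \<open>r' > 0\<close>]
    obtain M where M: "\<And>m n. m \<ge> M \<Longrightarrow> n \<ge> M \<Longrightarrow> norm (X m - X n) < r'"
      by metis
    show "\<exists>no. \<forall>n\<ge>no. norm (X n - Blinfun v) < r"
    proof (safe intro!: exI[where x=M])
      fix n assume n: "M \<le> n"
      have "norm (X n - Blinfun v) \<le> r'"
      proof (rule norm_blinfun_bound)
        fix x
        have "eventually (\<lambda>m. m \<ge> M) sequentially"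
          by (metis eventually_ge_at_top)
        hence ev_le: "eventually (\<lambda>m. norm (X n x - X m x) \<le> r' * norm x) sequentially"
        proof eventually_elim
          case (elim m)
          have "norm (X n x - X m x) = norm ((X n - X m) x)"
            by (simp add: blinfun.bilinear_simps)
          also have "\<dots> \<le> norm ((X n - X m)) * norm x"
            by (rule norm_blinfun)
          also have "\<dots> \<le> r' * norm x"
            using M[OF n elim] by (simp add: mult_right_mono)
          finally show ?case .
        qed
        have tendsto_v: "(\<lambda>m. norm (X n x - X m x)) \<longlonglongrightarrow> norm (X n x - Blinfun v x)"
          by (auto intro!: tendsto_intros Bv)
        show "norm ((X n - Blinfun v) x) \<le> r' * norm x"
          by (auto intro!: tendsto_upperbound tendsto_v ev_le simp: blinfun.bilinear_simps)
      qed (simp add: \<open>0 < r'\<close> less_imp_le)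
      thus "norm (X n - Blinfun v) < r"
        by (metis \<open>r' < r\<close> le_less_trans)
    qed
  qed
  thus "convergent X"
    by (rule convergentI)
qed

lemma geom_sum_bound:
  fixes r :: real
  assumes "0 \<le> r" "r < 1" "n \<le> m"
  shows "(\<Sum>k\<in>{n..<m}. r^k) \<le> r^n / (1 - r)"
proof -
  have "(\<Sum>k\<in>{n..<m}. r^k) * (1 - r) = r^n - r^m"
    using assms(3)
  proof (induct m)
    case 0 then show ?case by simp
  next
    case (Suc m)
    show ?case
    proof (cases "n = Suc m")
      case True then show ?thesis by simp
    next
      case False
      then have nm: "n \<le> m" using Suc by simp
      have "(\<Sum>k\<in>{n..<Suc m}. r^k) * (1 - r) = (\<Sum>k\<in>{n..<m}. r^k) * (1 - r) + r^m * (1 - r)"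
        using nm by (simp add: algebra_simps)
      also have "\<dots> = r^n - r^m + r^m * (1 - r)" using Suc nm by simp
      also have "\<dots> = r^n - r^Suc m" by (simp add: algebra_simps)
      finally show ?thesis .
    qed
  qed
  also have "\<dots> \<le> r^n" using assms by simp
  finally show ?thesis using assms by (simp add: field_simps)
qed

lemma geom_partial_Cauchy:
  fixes X :: "nat \<Rightarrow> 'b::real_normed_vector"
  assumes b: "\<And>n. norm (X n) \<le> r^n" and r: "0 \<le> r" "r < 1"
  shows "Cauchy (\<lambda>N. \<Sum>n<N. X n)"
proof (rule CauchyI)
  fix e :: real assume e: "0 < e"
  have "(\<lambda>n. r^n / (1 - r)) \<longlonglongrightarrow> 0 / (1 - r)"
    using r by (intro tendsto_divide LIMSEQ_power_zero tendsto_const) auto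
  then have "eventually (\<lambda>n. r^n / (1 - r) < e) sequentially" using order_tendstoD(2) e by fastforce
  then obtain M where M: "\<And>n. n \<ge> M \<Longrightarrow> r^n / (1 - r) < e"
    unfolding eventually_sequentially by blast
  have key: "norm ((\<Sum>n<m. X n) - (\<Sum>n<k. X n)) < e" if "M \<le> k" "k \<le> m" for k m
  proof -
    have "(\<Sum>n<m. X n) - (\<Sum>n<k. X n) = (\<Sum>n\<in>{k..<m}. X n)"
      using that by (metis sum_diff_nat_ivl lessThan_atLeast0 zero_le)
    then have "norm ((\<Sum>n<m. X n) - (\<Sum>n<k. X n)) \<le> (\<Sum>n\<in>{k..<m}. r^n)"
      by (metis (no_types, lifting) b norm_sum order_trans sum_mono)
    also have "\<dots> \<le> r^k / (1 - r)" using r that by (intro geom_sum_bound) auto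
    also have "\<dots> < e" using M that by auto
    finally show ?thesis .
  qed
  show "\<exists>M. \<forall>m\<ge>M. \<forall>n\<ge>M. norm ((\<Sum>n<m. X n) - (\<Sum>n<n. X n)) < e"
  proof (intro exI allI impI)
    fix m k assume "M \<le> m" "M \<le> k"
    then show "norm ((\<Sum>n<m. X n) - (\<Sum>n<k. X n)) < e"
      using key[of k m] key[of m k] by (cases "k \<le> m") (auto simp: norm_minus_commute)
  qed
qed

lemma neumann:
  fixes S :: "'a::{real_normed_vector,complete_space} \<Rightarrow>\<^sub>L 'a"
  assumes "norm (id_blinfun - S) < 1"
  shows "op_invertible S"
proof -
  define R where "R = id_blinfun - S"
  have S: "S = id_blinfun - R" by (simp add: R_def)
  have nR: "norm R < 1" using assms by (simp add: R_def)
  define Q where "Q N = (\<Sum>n<N. op_power R n)" for N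
  have "convergent Q" unfolding Q_def
    by (intro blinfun_Cauchy_convergent geom_partial_Cauchy[of _ "norm R"] op_power_norm nR) simp
  then obtain QL where QL: "Q \<longlonglongrightarrow> QL" unfolding convergent_def by blast
  have P0: "op_power R \<longlonglongrightarrow> 0"
  proof (rule Lim_null_comparison[of _ "\<lambda>n. (norm R)^n"])
    show "\<forall>\<^sub>F n in sequentially. norm (op_power R n) \<le> norm R ^ n"
      by (intro always_eventually allI op_power_norm)
    show "(\<lambda>n. norm R ^ n) \<longlonglongrightarrow> 0" using nR by (intro LIMSEQ_power_zero) auto
  qed
  have RQ: "R o\<^sub>L Q N = (\<Sum>n<N. op_power R (Suc n))" for N
    by (simp add: Q_def oc_sum_right op_power_Suc)
  have QR: "Q N o\<^sub>L R = (\<Sum>n<N. op_power R (Suc n))" for N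
    by (simp add: Q_def oc_sum_left op_power_Suc op_power_comm)
  have tel: "Q N - (\<Sum>n<N. op_power R (Suc n)) = id_blinfun - op_power R N" for N
    by (simp add: Q_def sum_subtractf[symmetric] sum_lessThan_telescope')
  have e1: "S o\<^sub>L Q N = id_blinfun - op_power R N" for N
    using tel[of N] by (simp add: S ocsimps RQ)
  have e2: "Q N o\<^sub>L S = id_blinfun - op_power R N" for N
    using tel[of N] by (simp add: S ocsimps QR)
  have "(\<lambda>N. S o\<^sub>L Q N) \<longlonglongrightarrow> (S o\<^sub>L QL)" by (intro oc_tendsto tendsto_const QL)
  moreover have "(\<lambda>N. S o\<^sub>L Q N) \<longlonglongrightarrow> id_blinfun"
    unfolding e1 using tendsto_diff[OF tendsto_const P0] by simp
  ultimately have a: "S o\<^sub>L QL = id_blinfun" using LIMSEQ_unique by blast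
  have "(\<lambda>N. Q N o\<^sub>L S) \<longlonglongrightarrow> (QL o\<^sub>L S)" by (intro oc_tendsto tendsto_const QL)
  moreover have "(\<lambda>N. Q N o\<^sub>L S) \<longlonglongrightarrow> id_blinfun"
    unfolding e2 using tendsto_diff[OF tendsto_const P0] by simp
  ultimately have b: "QL o\<^sub>L S = id_blinfun" using LIMSEQ_unique by blast
  show ?thesis using b a by (rule op_invertibleI)
qed

lemma sa_qlb_invertible:
  fixes S :: "'a::{real_inner,complete_space} \<Rightarrow>\<^sub>L 'a"
  assumes sa: "op_selfadjoint S" and c: "0 < c" and q: "\<And>x. c * (norm x)^2 \<le> inner (S x) x"
  shows "op_invertible S"
proof -
  define M where "M = max (norm S) c"
  have M: "0 < M" "c \<le> M" "norm S \<le> M" using c by (auto simp: M_def)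
  define k where "k = 1 / M"
  have k: "0 < k" "k * c \<le> 1" "k * norm S \<le> 1" using M by (auto simp: k_def field_simps)
  define R where "R = id_blinfun - k *\<^sub>R S"
  have saR: "op_selfadjoint R" unfolding R_def by (intro sa_diff sa_id sa_scale sa)
  have iR: "inner (R x) x = (norm x)^2 - k * inner (S x) x" for x
    by (simp add: R_def opsimps inner_diff_left power2_norm_eq_inner)
  have "norm R \<le> 1 - k * c"
  proof (rule sa_norm_le[OF saR])
    show "0 \<le> 1 - k * c" using k by simp
    fix x
    have up: "inner (R x) x \<le> (1 - k * c) * (norm x)^2"
      using q[of x] k unfolding iR by (simp add: algebra_simps)
    have "inner (S x) x \<le> norm S * (norm x)^2" using inner_op_le_norm[of S x] by simp
    then have "k * inner (S x) x \<le> k * (norm S * (norm x)^2)" using k by (simp add: mult_left_mono)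
    also have "\<dots> \<le> (norm x)^2" using k by (simp add: mult.assoc[symmetric] mult_left_le_one_le)
    finally have "0 \<le> inner (R x) x" unfolding iR by simp
    then show "\<bar>inner (R x) x\<bar> \<le> (1 - k * c) * (norm x)^2" using up by simp
  qed
  moreover have "0 < k * c" using k c by simp
  ultimately have "norm (id_blinfun - k *\<^sub>R S) < 1" by (simp add: R_def)
  then have ik: "op_invertible (k *\<^sub>R S)" by (rule neumann)
  have "1/k \<noteq> 0" using k by simp
  then have "op_invertible ((1/k) *\<^sub>R (k *\<^sub>R S))" using ik by (rule invertible_scale)
  moreover have "(1/k) *\<^sub>R (k *\<^sub>R S) = S" using k by simp
  ultimately show ?thesis by metis
qed

lemma spec_bound:
  fixes S :: "'a::{real_inner,complete_space} \<Rightarrow>\<^sub>L 'a"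
  assumes sa: "op_selfadjoint S"
    and lo: "\<And>x. m * (norm x)^2 \<le> inner (S x) x" and hi: "\<And>x. inner (S x) x \<le> M * (norm x)^2"
  shows "op_spectrum S \<subseteq> {m..M}"
proof
  fix l assume l: "l \<in> op_spectrum S"
  then have ni: "\<not> op_invertible (S - l *\<^sub>R id_blinfun)" by (simp add: op_spectrum_def)
  have "\<not> l < m"
  proof
    assume "l < m"
    have "op_invertible (S - l *\<^sub>R id_blinfun)"
    proof (rule sa_qlb_invertible)
      show "op_selfadjoint (S - l *\<^sub>R id_blinfun)" by (intro sa_diff sa sa_scale sa_id)
      show "0 < m - l" using \<open>l < m\<close> by simp
      fix x show "(m - l) * (norm x)^2 \<le> inner ((S - l *\<^sub>R id_blinfun) x) x"
        using lo[of x] by (simp add: opsimps inner_diff_left power2_norm_eq_inner algebra_simps)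
    qed
    then show False using ni by simp
  qed
  moreover have "\<not> M < l"
  proof
    assume "M < l"
    have "op_invertible (- (S - l *\<^sub>R id_blinfun))"
    proof (rule sa_qlb_invertible)
      show "op_selfadjoint (- (S - l *\<^sub>R id_blinfun))" by (intro sa_uminus sa_diff sa sa_scale sa_id)
      show "0 < l - M" using \<open>M < l\<close> by simp
      fix x show "(l - M) * (norm x)^2 \<le> inner ((- (S - l *\<^sub>R id_blinfun)) x) x"
        using hi[of x] by (simp add: opsimps inner_diff_left power2_norm_eq_inner algebra_simps)
    qed
    then have "op_invertible (- (- (S - l *\<^sub>R id_blinfun)))" by (rule invertible_uminus)
    then show False using ni by simp
  qed
  ultimately show "l \<in> {m..M}" by simp
qed

lemma spec_bound_norm:
  fixes S :: "'a::{real_inner,complete_space} \<Rightarrow>\<^sub>L 'a"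
  assumes sa: "op_selfadjoint S"
  shows "op_spectrum S \<subseteq> {-norm S..norm S}"
proof (rule spec_bound[OF sa])
  fix x
  show "- norm S * (norm x)^2 \<le> inner (S x) x" "inner (S x) x \<le> norm S * (norm x)^2"
    using inner_op_le_norm[of S x] by (auto simp: abs_le_iff)
qed

lemma norm_in_spec:
  fixes S :: "'a::{real_inner,complete_space} \<Rightarrow>\<^sub>L 'a"
  assumes sa: "op_selfadjoint S" and nt: "\<exists>x::'a. x \<noteq> 0"
  shows "\<exists>l\<in>op_spectrum S. \<bar>l\<bar> = norm S"
proof -
  obtain x0 :: 'a where x0: "x0 \<noteq> 0" using nt by blast
  define K where "K = norm S"
  show ?thesis
  proof (cases "K = 0")
    case True
    then have S0: "S = 0" by (simp add: K_def)
    have "\<not> op_invertible (0::'a \<Rightarrow>\<^sub>L 'a)"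
    proof
      assume "op_invertible (0::'a \<Rightarrow>\<^sub>L 'a)"
      then obtain Z where "Z o\<^sub>L (0::'a \<Rightarrow>\<^sub>L 'a) = id_blinfun" unfolding op_invertible_def by blast
      then have "id_blinfun = (0::'a \<Rightarrow>\<^sub>L 'a)" by simp
      then have "id_blinfun x0 = (0::'a \<Rightarrow>\<^sub>L 'a) x0" by simp
      then show False using x0 by simp
    qed
    then have "0 \<in> op_spectrum S" by (simp add: op_spectrum_def S0)
    then show ?thesis using True K_def by auto
  next
    case False
    then have K: "K > 0" by (simp add: K_def)
    define P where "P = (K^2) *\<^sub>R id_blinfun - (S o\<^sub>L S)"
    have iP: "inner (P x) x = K^2 * (norm x)^2 - (norm (S x))^2" for x
    proof -
      have "inner (S (S x)) x = inner (S x) (S x)" using sa unfolding op_selfadjoint_def by simp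
      then show ?thesis by (simp add: P_def opsimps inner_diff_left power2_norm_eq_inner)
    qed
    have "\<not> op_invertible P"
    proof
      assume inv: "op_invertible P"
      have posP: "op_pos P" unfolding op_pos_def
      proof
        show "op_selfadjoint P" unfolding P_def by (intro sa_diff sa_scale sa_id sa_comm sa) simp
        show "\<forall>x. 0 \<le> inner (P x) x"
        proof
          fix x
          have "norm (S x) \<le> K * norm x" unfolding K_def by (rule norm_blinfun)
          then have "(norm (S x))^2 \<le> (K * norm x)^2" by (intro power_mono) auto
          then show "0 \<le> inner (P x) x" unfolding iP by (simp add: power_mult_distrib)
        qed
      qed
      obtain c where c: "c > 0" "\<And>x. c * (norm x)^2 \<le> inner (P x) x"
        using pos_inv_qlb[OF posP inv] by blast
      have b: "(norm (S x))^2 \<le> (K^2 - c) * (norm x)^2" for x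
        using c(2)[of x] unfolding iP by (simp add: algebra_simps)
      have Kc: "0 \<le> K^2 - c"
      proof -
        have "0 \<le> (K^2 - c) * (norm x0)^2" using b[of x0] by (metis order_trans zero_le_power2)
        then show ?thesis using x0 by (simp add: zero_le_mult_iff)
      qed
      have "norm S \<le> sqrt (K^2 - c)"
      proof (rule norm_blinfun_bound)
        show "0 \<le> sqrt (K^2 - c)" using Kc by simp
        fix x
        have "sqrt ((norm (S x))^2) \<le> sqrt ((K^2 - c) * (norm x)^2)" using b by (rule real_sqrt_le_mono)
        then show "norm (S x) \<le> sqrt (K^2 - c) * norm x" by (simp add: real_sqrt_mult)
      qed
      also have "\<dots> < sqrt (K^2)" using c K by (intro real_sqrt_less_mono) simp
      also have "\<dots> = K" using K by simp
      finally show False by (simp add: K_def)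
    qed
    moreover have "P = (K *\<^sub>R id_blinfun - S) o\<^sub>L (K *\<^sub>R id_blinfun + S)"
      by (rule blinfun_eqI) (simp add: P_def opsimps power2_eq_square algebra_simps)
    ultimately have "\<not> op_invertible (K *\<^sub>R id_blinfun - S) \<or> \<not> op_invertible (K *\<^sub>R id_blinfun + S)"
      using invertible_comp by metis
    then show ?thesis
    proof
      assume "\<not> op_invertible (K *\<^sub>R id_blinfun - S)"
      then have "\<not> op_invertible (S - K *\<^sub>R id_blinfun)" using invertible_uminus by fastforce
      then have "K \<in> op_spectrum S" by (simp add: op_spectrum_def)
      then show ?thesis using K K_def by (intro bexI[of _ K]) auto
    next
      assume "\<not> op_invertible (K *\<^sub>R id_blinfun + S)"
      moreover have "K *\<^sub>R id_blinfun + S = S - (-K) *\<^sub>R id_blinfun" by simp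
      ultimately have m: "-K \<in> op_spectrum S" by (simp add: op_spectrum_def)
      have "\<bar>-K\<bar> = norm S" using K K_def by simp
      then show ?thesis using m by blast
    qed
  qed
qed

subsection \<open>Polynomials of operators\<close>

lemma op_poly_ext:
  assumes "degree p \<le> N"
  shows "op_poly p T = (\<Sum>i\<le>N. coeff p i *\<^sub>R op_power T i)"
  unfolding op_poly_def
  by (rule sum.mono_neutral_left) (use assms in \<open>auto simp: coeff_eq_0\<close>)

lemma op_poly_0[simp]: "op_poly 0 T = 0"
  by (simp add: op_poly_def)

lemma op_poly_pCons: "op_poly (pCons a p) T = a *\<^sub>R id_blinfun + (T o\<^sub>L op_poly p T)"
proof -
  have "op_poly (pCons a p) T = (\<Sum>i\<le>Suc (degree p). coeff (pCons a p) i *\<^sub>R op_power T i)"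
    by (rule op_poly_ext) (simp add: degree_pCons_le)
  also have "\<dots> = a *\<^sub>R id_blinfun + (\<Sum>i\<le>degree p. coeff p i *\<^sub>R op_power T (Suc i))"
    by (subst sum.atMost_Suc_shift) simp
  also have "(\<Sum>i\<le>degree p. coeff p i *\<^sub>R op_power T (Suc i)) = T o\<^sub>L op_poly p T"
    by (simp add: op_poly_def oc_sum_right oc_scale_right op_power_Suc)
  finally show ?thesis .
qed

lemma op_poly_add: "op_poly (p + q) T = op_poly p T + op_poly q T"
proof -
  define N where "N = max (degree p) (degree q)"
  have "op_poly (p + q) T = (\<Sum>i\<le>N. coeff (p + q) i *\<^sub>R op_power T i)"
    by (rule op_poly_ext) (simp add: N_def degree_add_le)
  also have "\<dots> = (\<Sum>i\<le>N. coeff p i *\<^sub>R op_power T i) + (\<Sum>i\<le>N. coeff q i *\<^sub>R op_power T i)"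
    by (simp add: scaleR_add_left sum.distrib)
  also have "\<dots> = op_poly p T + op_poly q T"
    by (subst (1 2) op_poly_ext[of _ N]) (simp_all add: N_def)
  finally show ?thesis .
qed

lemma op_poly_smult: "op_poly (smult c p) T = c *\<^sub>R op_poly p T"
proof -
  have "op_poly (smult c p) T = (\<Sum>i\<le>degree p. coeff (smult c p) i *\<^sub>R op_power T i)"
    by (rule op_poly_ext) (simp add: degree_smult_le)
  also have "\<dots> = c *\<^sub>R op_poly p T"
    by (simp add: op_poly_def scaleR_sum_right)
  finally show ?thesis .
qed

lemma op_poly_minus: "op_poly (- p) T = - op_poly p T"
  using op_poly_smult[of "-1" p T] by simp

lemma op_poly_diff: "op_poly (p - q) T = op_poly p T - op_poly q T"
  using op_poly_add[of p "- q" T] op_poly_minus[of q T] by simp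

lemma op_poly_const: "op_poly [:c:] T = c *\<^sub>R id_blinfun"
  by (simp add: op_poly_pCons)

lemma op_poly_lin: "op_poly [:a, b:] T = a *\<^sub>R id_blinfun + b *\<^sub>R T"
  by (simp add: op_poly_pCons oc_scale_right)

lemma op_poly_mult: "op_poly (p * q) T = op_poly p T o\<^sub>L op_poly q T"
proof (induct p rule: pCons_induct)
  case 0 then show ?case by simp
next
  case (pCons a p)
  have "op_poly (pCons a p * q) T = a *\<^sub>R op_poly q T + (T o\<^sub>L op_poly (p * q) T)"
    by (simp add: mult_pCons_left op_poly_add op_poly_smult op_poly_pCons)
  also have "\<dots> = op_poly (pCons a p) T o\<^sub>L op_poly q T"
    using pCons by (simp add: op_poly_pCons ocsimps oc_assoc)
  finally show ?case .
qed

lemma op_poly_comm_T: "T o\<^sub>L op_poly p T = op_poly p T o\<^sub>L T"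
proof (induct p rule: pCons_induct)
  case 0 then show ?case by simp
next
  case (pCons a p)
  have "T o\<^sub>L (op_poly p T o\<^sub>L T) = op_poly p T o\<^sub>L (T o\<^sub>L T)"
    by (metis oc_assoc pCons(2))
  then show ?case by (simp add: op_poly_pCons ocsimps) (metis oc_assoc pCons(2))
qed

lemma op_poly_comm: "op_poly p T o\<^sub>L op_poly q T = op_poly q T o\<^sub>L op_poly p T"
  by (metis op_poly_mult mult.commute)

lemma op_poly_sa:
  fixes T :: "'a::real_inner \<Rightarrow>\<^sub>L 'a"
  assumes "op_selfadjoint T"
  shows "op_selfadjoint (op_poly p T)"
proof (induct p rule: pCons_induct)
  case 0 then show ?case by simp
next
  case (pCons a p)
  show ?case unfolding op_poly_pCons
    by (intro sa_add sa_scale sa_id sa_comm assms pCons(2) op_poly_comm_T)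
qed

subsection \<open>Complex evaluation of real polynomials\<close>

definition cev :: "real poly \<Rightarrow> complex \<Rightarrow> complex" where
  "cev q z = poly (map_poly complex_of_real q) z"

lemma cev_0[simp]: "cev 0 z = 0"
  by (simp add: cev_def)

lemma cev_pCons: "cev (pCons a p) z = of_real a + z * cev p z"
  by (simp add: cev_def map_poly_pCons)

lemma cev_add: "cev (p + q) z = cev p z + cev q z"
  by (induct p q rule: poly_induct2) (simp_all add: cev_pCons algebra_simps)

lemma cev_smult: "cev (smult c p) z = of_real c * cev p z"
  by (induct p rule: pCons_induct) (simp_all add: cev_pCons algebra_simps)

lemma cev_mult: "cev (p * q) z = cev p z * cev q z"
  by (induct p rule: pCons_induct) (simp_all add: cev_pCons mult_pCons_left cev_add cev_smult algebra_simps)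

lemma cev_real: "cev p (of_real r) = of_real (poly p r)"
  by (induct p rule: pCons_induct) (simp_all add: cev_pCons)

lemma cev_root:
  assumes "degree q \<noteq> 0"
  shows "\<exists>z. cev q z = 0"
proof -
  have "degree (map_poly complex_of_real q) = degree q" by (rule degree_map_poly) simp
  then have "\<not> constant (poly (map_poly complex_of_real q))"
    using assms by (simp add: constant_degree)
  then show ?thesis unfolding cev_def by (rule fundamental_theorem_of_algebra)
qed

subsection \<open>Spectral mapping for polynomials\<close>

lemma poly_nonvanish_invertible:
  fixes T :: "'a::{real_inner,complete_space} \<Rightarrow>\<^sub>L 'a"
  assumes sa: "op_selfadjoint T"
  shows "(\<forall>l\<in>op_spectrum T. poly q l \<noteq> 0) \<Longrightarrow> op_invertible (op_poly q T)"
proof (induct "degree q" arbitrary: q rule: less_induct)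
  case less
  note nz = less(2)
  show ?case
  proof (cases "\<exists>x::'a. x \<noteq> 0")
    case False then show ?thesis using triv_invertible by blast
  next
    case True
    obtain l0 where l0: "l0 \<in> op_spectrum T" using norm_in_spec[OF sa True] by blast
    show ?thesis
    proof (cases "degree q = 0")
      case True
      then obtain c where qc: "q = [:c:]" by (rule degree_eq_zeroE)
      have "c \<noteq> 0" using nz l0 qc by auto
      then show ?thesis unfolding qc op_poly_const by (intro invertible_scale invertible_id)
    next
      case False
      then have q0: "q \<noteq> 0" by auto
      obtain z where z: "cev q z = 0" using cev_root[OF False] by blast
      show ?thesis
      proof (cases "Im z = 0")
        case True
        define r where "r = Re z"
        have zr: "z = of_real r" using True by (simp add: r_def complex_eq_iff)
        have "poly q r = 0" using z cev_real[of q r] zr by simp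
        then obtain d where qd: "q = [:-r, 1:] * d" using poly_eq_0_iff_dvd by (metis dvdE)
        have d0: "d \<noteq> 0" using q0 qd by auto
        have "degree q = degree [:-r, 1:] + degree d" unfolding qd by (rule degree_mult_eq) (use d0 in auto)
        then have degd: "degree d < degree q" by simp
        have "\<forall>l\<in>op_spectrum T. poly d l \<noteq> 0" using nz qd by auto
        then have invd: "op_invertible (op_poly d T)" using less(1)[OF degd] by blast
        have "r \<notin> op_spectrum T" using nz \<open>poly q r = 0\<close> by auto
        then have "op_invertible (T - r *\<^sub>R id_blinfun)" by (simp add: op_spectrum_def)
        moreover have "op_poly [:-r, 1:] T = T - r *\<^sub>R id_blinfun" by (simp add: op_poly_lin)
        ultimately show ?thesis unfolding qd op_poly_mult using invd invertible_comp by metis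
      next
        case False
        define a where "a = Re z"
        define b where "b = Im z"
        have b0: "b \<noteq> 0" using False by (simp add: b_def)
        define g where "g = [:a^2 + b^2, -2*a, 1:]"
        have g0: "g \<noteq> 0" by (simp add: g_def)
        have degg: "degree g = 2" by (simp add: g_def)
        have gz: "cev g z = 0"
          by (simp add: g_def cev_pCons complex_eq_iff a_def b_def power2_eq_square algebra_simps)
        define r where "r = q mod g"
        define d where "d = q div g"
        have qgdr: "q = g * d + r" by (simp add: r_def d_def)
        have rz: "cev r z = 0" using z gz qgdr by (metis add_0 cev_add cev_mult mult_zero_left)
        have "r = 0 \<or> degree r < 2" using degree_mod_less[OF g0, of q] degg by (simp add: r_def)
        then have dr: "degree r \<le> 1" by auto
        have r0: "r = 0"
        proof -
          have "r = [:coeff r 0, coeff r 1:]"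
            by (rule poly_eqI) (use dr in \<open>auto simp: coeff_pCons coeff_eq_0 split: nat.split\<close>)
          then have "cev r z = of_real (coeff r 0) + z * of_real (coeff r 1)"
            by (metis cev_0 cev_pCons mult_zero_right add_0_right)
          then have "of_real (coeff r 0) + z * of_real (coeff r 1) = 0" using rz by simp
          then have "coeff r 1 * b = 0" "coeff r 0 + a * coeff r 1 = 0"
            by (auto simp: complex_eq_iff a_def b_def)
          then have "coeff r 1 = 0" "coeff r 0 = 0" using b0 by auto
          then show ?thesis using \<open>r = [:coeff r 0, coeff r 1:]\<close> by simp
        qed
        have qgd: "q = g * d" using qgdr r0 by simp
        have d0: "d \<noteq> 0" using q0 qgd by auto
        have degd: "degree d < degree q" using qgd d0 g0 degg by (simp add: degree_mult_eq)
        have "\<forall>l\<in>op_spectrum T. poly d l \<noteq> 0" using nz qgd by auto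
        then have invd: "op_invertible (op_poly d T)" using less(1)[OF degd] by blast
        have opg: "op_poly g T = (a^2 + b^2) *\<^sub>R id_blinfun - (2*a) *\<^sub>R T + (T o\<^sub>L T)"
          by (simp add: g_def op_poly_pCons ocsimps algebra_simps)
        have invg: "op_invertible (op_poly g T)"
        proof (rule sa_qlb_invertible)
          show "op_selfadjoint (op_poly g T)" by (rule op_poly_sa[OF sa])
          show "0 < b^2" using b0 by simp
          fix x
          have tt: "inner (T (T x)) x = inner (T x) (T x)" using sa unfolding op_selfadjoint_def by simp
          have n1: "(norm (T x - a *\<^sub>R x))^2 = inner (T x) (T x) - 2 * a * inner (T x) x + a^2 * inner x x"
            unfolding power2_norm_eq_inner
            by (simp add: inner_diff_left inner_diff_right inner_commute algebra_simps power2_eq_square)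
          have "inner (op_poly g T x) x = (norm (T x - a *\<^sub>R x))^2 + b^2 * (norm x)^2"
            unfolding opg n1 using tt
            by (simp add: opsimps inner_add_left inner_diff_left power2_norm_eq_inner
                algebra_simps)
          then show "b^2 * (norm x)^2 \<le> inner (op_poly g T x) x" by simp
        qed
        show ?thesis unfolding qgd op_poly_mult using invg invd by (rule invertible_comp)
      qed
    qed
  qed
qed

lemma spec_poly:
  fixes T :: "'a::{real_inner,complete_space} \<Rightarrow>\<^sub>L 'a"
  assumes sa: "op_selfadjoint T" and mu: "\<mu> \<in> op_spectrum (op_poly p T)"
  shows "\<exists>l\<in>op_spectrum T. poly p l = \<mu>"
proof (rule ccontr)
  assume "\<not> ?thesis"
  then have "\<forall>l\<in>op_spectrum T. poly (p - [:\<mu>:]) l \<noteq> 0" by auto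
  then have "op_invertible (op_poly (p - [:\<mu>:]) T)" by (rule poly_nonvanish_invertible[OF sa])
  then have "op_invertible (op_poly p T - \<mu> *\<^sub>R id_blinfun)" by (simp add: op_poly_diff op_poly_const)
  then show False using mu by (simp add: op_spectrum_def)
qed

lemma op_poly_norm:
  fixes T :: "'a::{real_inner,complete_space} \<Rightarrow>\<^sub>L 'a"
  assumes sa: "op_selfadjoint T" and B: "0 \<le> B" and b: "\<And>l. l \<in> op_spectrum T \<Longrightarrow> \<bar>poly p l\<bar> \<le> B"
  shows "norm (op_poly p T) \<le> B"
proof (cases "\<exists>x::'a. x \<noteq> 0")
  case False then show ?thesis using triv_op[of "op_poly p T"] B by auto
next
  case True
  obtain \<mu> where mu: "\<mu> \<in> op_spectrum (op_poly p T)" "\<bar>\<mu>\<bar> = norm (op_poly p T)"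
    using norm_in_spec[OF op_poly_sa[OF sa] True] by blast
  obtain l where "l \<in> op_spectrum T" "poly p l = \<mu>" using spec_poly[OF sa mu(1)] by blast
  then show ?thesis using b mu by metis
qed

subsection \<open>Continuous functional calculus\<close>

lemma unif_poly_op_close:
  fixes T :: "'a::{real_inner,complete_space} \<Rightarrow>\<^sub>L 'a"
  assumes sa: "op_selfadjoint T" and e: "0 < e"
    and P: "\<forall>x\<in>op_spectrum T. dist (poly p x) (f x) < e"
    and Q: "\<forall>x\<in>op_spectrum T. dist (poly q x) (f x) < e"
  shows "norm (op_poly p T - op_poly q T) \<le> 2 * e"
proof -
  have "norm (op_poly (p - q) T) \<le> 2 * e"
  proof (rule op_poly_norm[OF sa])
    show "0 \<le> 2 * e" using e by simp
    fix l assume "l \<in> op_spectrum T"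
    then have "\<bar>poly p l - f l\<bar> < e" "\<bar>poly q l - f l\<bar> < e" using P Q by (auto simp: dist_real_def)
    then show "\<bar>poly (p - q) l\<bar> \<le> 2 * e" by simp
  qed
  then show ?thesis by (simp add: op_poly_diff)
qed

lemma fc_cauchy:
  fixes T :: "'a::{real_inner,complete_space} \<Rightarrow>\<^sub>L 'a"
  assumes sa: "op_selfadjoint T"
    and P: "uniform_limit (op_spectrum T) (\<lambda>k. poly (P k)) f sequentially"
  shows "Cauchy (\<lambda>k. op_poly (P k) T)"
proof (rule CauchyI)
  fix e :: real assume e: "0 < e"
  have e3: "0 < e/3" using e by simp
  have "eventually (\<lambda>k. \<forall>x\<in>op_spectrum T. dist (poly (P k) x) (f x) < e/3) sequentially"
    using uniform_limitD[OF P e3] .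
  then obtain M where M: "\<And>k. k \<ge> M \<Longrightarrow> \<forall>x\<in>op_spectrum T. dist (poly (P k) x) (f x) < e/3"
    unfolding eventually_sequentially by blast
  show "\<exists>M. \<forall>m\<ge>M. \<forall>n\<ge>M. norm (op_poly (P m) T - op_poly (P n) T) < e"
  proof (intro exI allI impI)
    fix m n assume "M \<le> m" "M \<le> n"
    then have "norm (op_poly (P m) T - op_poly (P n) T) \<le> 2 * (e/3)"
      using e M by (intro unif_poly_op_close[OF sa]) auto
    then show "norm (op_poly (P m) T - op_poly (P n) T) < e" using e by simp
  qed
qed

lemma fc_diff_zero:
  fixes T :: "'a::{real_inner,complete_space} \<Rightarrow>\<^sub>L 'a"
  assumes sa: "op_selfadjoint T"
    and P: "uniform_limit (op_spectrum T) (\<lambda>k. poly (P k)) f sequentially"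
    and Q: "uniform_limit (op_spectrum T) (\<lambda>k. poly (Q k)) f sequentially"
  shows "(\<lambda>k. op_poly (P k) T - op_poly (Q k) T) \<longlonglongrightarrow> 0"
proof (rule tendstoI)
  fix e :: real assume e: "0 < e"
  have e3: "0 < e/3" using e by simp
  have "eventually (\<lambda>k. \<forall>x\<in>op_spectrum T. dist (poly (P k) x) (f x) < e/3) sequentially"
    using uniform_limitD[OF P e3] .
  moreover have "eventually (\<lambda>k. \<forall>x\<in>op_spectrum T. dist (poly (Q k) x) (f x) < e/3) sequentially"
    using uniform_limitD[OF Q e3] .
  ultimately show "eventually (\<lambda>k. dist (op_poly (P k) T - op_poly (Q k) T) 0 < e) sequentially"
  proof eventually_elim
    case (elim k)
    then have "norm (op_poly (P k) T - op_poly (Q k) T) \<le> 2 * (e/3)"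
      using e by (intro unif_poly_op_close[OF sa]) auto
    then show ?case using e by simp
  qed
qed

lemma fc_tendsto:
  fixes T :: "'a::{real_inner,complete_space} \<Rightarrow>\<^sub>L 'a"
  assumes sa: "op_selfadjoint T"
    and P: "uniform_limit (op_spectrum T) (\<lambda>k. poly (P k)) f sequentially"
  shows "(\<lambda>k. op_poly (P k) T) \<longlonglongrightarrow> op_fc f T"
proof -
  obtain L where L: "(\<lambda>k. op_poly (P k) T) \<longlonglongrightarrow> L"
    using blinfun_Cauchy_convergent[OF fc_cauchy[OF sa P]] unfolding convergent_def by blast
  have all: "(\<lambda>k. op_poly (Q k) T) \<longlonglongrightarrow> L"
    if Q: "uniform_limit (op_spectrum T) (\<lambda>k. poly (Q k)) f sequentially" for Q
  proof -
    have "(\<lambda>k. op_poly (P k) T - (op_poly (P k) T - op_poly (Q k) T)) \<longlonglongrightarrow> L - 0"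
      by (intro tendsto_diff L fc_diff_zero[OF sa P Q])
    then show ?thesis by simp
  qed
  have "op_fc f T = L"
    unfolding op_fc_def
  proof (rule the_equality)
    show "\<forall>Q. uniform_limit (op_spectrum T) (\<lambda>k x. poly (Q k) x) f sequentially \<longrightarrow>
              (\<lambda>k. op_poly (Q k) T) \<longlonglongrightarrow> L"
      using all by auto
    fix S assume "\<forall>Q. uniform_limit (op_spectrum T) (\<lambda>k x. poly (Q k) x) f sequentially \<longrightarrow>
              (\<lambda>k. op_poly (Q k) T) \<longlonglongrightarrow> S"
    then have "(\<lambda>k. op_poly (P k) T) \<longlonglongrightarrow> S" using P by auto
    then show "S = L" using L LIMSEQ_unique by blast
  qed
  then show ?thesis using L by simp
qed

lemma weierstrass_poly:
  fixes K :: "real set"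
  assumes K: "compact K" and f: "continuous_on K f"
  shows "\<exists>P. uniform_limit K (\<lambda>k. poly (P k)) f sequentially"
proof -
  have "\<forall>k. \<exists>p. \<forall>x\<in>K. \<bar>f x - poly p x\<bar> < 1 / Suc k"
  proof
    fix k
    obtain g where g: "real_polynomial_function g" "\<And>x. x \<in> K \<Longrightarrow> \<bar>f x - g x\<bar> < 1 / Suc k"
      using Stone_Weierstrass_real_polynomial_function[OF K f, of "1 / Suc k"] by auto
    obtain a n where gan: "g = (\<lambda>x. \<Sum>i\<le>n. a i * x^i)"
      using g(1) real_polynomial_function_iff_sum by blast
    define p where "p = (\<Sum>i\<le>n. monom (a i) i)"
    have "poly p x = g x" for x by (simp add: p_def gan poly_sum poly_monom)
    then show "\<exists>p. \<forall>x\<in>K. \<bar>f x - poly p x\<bar> < 1 / Suc k" using g(2) by metis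
  qed
  then obtain P where P: "\<And>k x. x \<in> K \<Longrightarrow> \<bar>f x - poly (P k) x\<bar> < 1 / Suc k" by metis
  have "uniform_limit K (\<lambda>k. poly (P k)) f sequentially"
  proof (rule uniform_limitI)
    fix e :: real assume e: "0 < e"
    then obtain N where N: "N \<noteq> 0" "inverse (real N) < e" using real_arch_inverse by blast
    show "\<forall>\<^sub>F k in sequentially. \<forall>x\<in>K. dist (poly (P k) x) (f x) < e"
      unfolding eventually_sequentially
    proof (intro exI allI impI ballI)
      fix k x assume k: "N \<le> k" and x: "x \<in> K"
      have "1 / real (Suc k) \<le> inverse (real N)" using k N by (simp add: field_simps)
      then show "dist (poly (P k) x) (f x) < e" using P[OF x, of k] N by (simp add: dist_real_def abs_minus_commute)
    qed
  qed
  then show ?thesis by blast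
qed

lemma fc_char:
  fixes T :: "'a::{real_inner,complete_space} \<Rightarrow>\<^sub>L 'a"
  assumes sa: "op_selfadjoint T" and K: "op_spectrum T \<subseteq> K" "compact K" and f: "continuous_on K f"
  obtains P where "uniform_limit (op_spectrum T) (\<lambda>k. poly (P k)) f sequentially"
    "(\<lambda>k. op_poly (P k) T) \<longlonglongrightarrow> op_fc f T"
proof -
  obtain P where "uniform_limit K (\<lambda>k. poly (P k)) f sequentially" using weierstrass_poly[OF K(2) f] by blast
  then have P: "uniform_limit (op_spectrum T) (\<lambda>k. poly (P k)) f sequentially"
    using uniform_limit_on_subset K(1) by blast
  show ?thesis using that P fc_tendsto[OF sa P] by blast
qed

lemma bounded_on_subset:
  fixes f :: "real \<Rightarrow> real"
  assumes "compact K" "continuous_on K f" "S \<subseteq> K"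
  shows "bounded (f ` S)"
  using assms by (meson bounded_subset compact_continuous_image compact_imp_bounded image_mono)

lemma sa_lim:
  fixes X :: "nat \<Rightarrow> 'a::real_inner \<Rightarrow>\<^sub>L 'a"
  assumes X: "X \<longlonglongrightarrow> L" and sa: "\<forall>n. op_selfadjoint (X n)"
  shows "op_selfadjoint L"
  unfolding op_selfadjoint_def
proof (intro allI)
  fix x y
  have "(\<lambda>n. inner (X n x) y) \<longlonglongrightarrow> inner (L x) y"
    by (intro tendsto_intros blinfun.tendsto X)
  moreover have "(\<lambda>n. inner (X n x) y) \<longlonglongrightarrow> inner x (L y)"
  proof -
    have "(\<lambda>n. inner x (X n y)) \<longlonglongrightarrow> inner x (L y)"
      by (intro tendsto_intros blinfun.tendsto X)
    moreover have "inner (X n x) y = inner x (X n y)" for n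
      using sa unfolding op_selfadjoint_def by blast
    ultimately show ?thesis by simp
  qed
  ultimately show "inner (L x) y = inner x (L y)" using LIMSEQ_unique by blast
qed

context
  fixes T :: "'a::{real_inner,complete_space} \<Rightarrow>\<^sub>L 'a" and K :: "real set"
  assumes sa: "op_selfadjoint T" and KT: "op_spectrum T \<subseteq> K" and cK: "compact K"
begin

lemma fc_add:
  assumes f: "continuous_on K f" and g: "continuous_on K g"
  shows "op_fc (\<lambda>x. f x + g x) T = op_fc f T + op_fc g T"
proof -
  obtain P where P: "uniform_limit (op_spectrum T) (\<lambda>k. poly (P k)) f sequentially"
    "(\<lambda>k. op_poly (P k) T) \<longlonglongrightarrow> op_fc f T" using fc_char[OF sa KT cK f] by blast
  obtain Q where Q: "uniform_limit (op_spectrum T) (\<lambda>k. poly (Q k)) g sequentially"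
    "(\<lambda>k. op_poly (Q k) T) \<longlonglongrightarrow> op_fc g T" using fc_char[OF sa KT cK g] by blast
  have "uniform_limit (op_spectrum T) (\<lambda>k x. poly (P k) x + poly (Q k) x) (\<lambda>x. f x + g x) sequentially"
    by (intro uniform_limit_add P(1) Q(1))
  moreover have "(\<lambda>k. poly (P k + Q k)) = (\<lambda>k x. poly (P k) x + poly (Q k) x)" by (simp add: fun_eq_iff)
  ultimately have "uniform_limit (op_spectrum T) (\<lambda>k. poly (P k + Q k)) (\<lambda>x. f x + g x) sequentially"
    by simp
  from fc_tendsto[OF sa this] have "(\<lambda>k. op_poly (P k) T + op_poly (Q k) T) \<longlonglongrightarrow> op_fc (\<lambda>x. f x + g x) T"
    by (simp add: op_poly_add)
  moreover have "(\<lambda>k. op_poly (P k) T + op_poly (Q k) T) \<longlonglongrightarrow> op_fc f T + op_fc g T"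
    by (intro tendsto_add P(2) Q(2))
  ultimately show ?thesis using LIMSEQ_unique by blast
qed

lemma fc_scale:
  assumes f: "continuous_on K f"
  shows "op_fc (\<lambda>x. c * f x) T = c *\<^sub>R op_fc f T"
proof -
  obtain P where P: "uniform_limit (op_spectrum T) (\<lambda>k. poly (P k)) f sequentially"
    "(\<lambda>k. op_poly (P k) T) \<longlonglongrightarrow> op_fc f T" using fc_char[OF sa KT cK f] by blast
  have "uniform_limit (op_spectrum T) (\<lambda>k x. c * poly (P k) x) (\<lambda>x. c * f x) sequentially"
    by (intro uniform_limit_intros P(1))
  moreover have "(\<lambda>k. poly (smult c (P k))) = (\<lambda>k x. c * poly (P k) x)" by (simp add: fun_eq_iff)
  ultimately have "uniform_limit (op_spectrum T) (\<lambda>k. poly (smult c (P k))) (\<lambda>x. c * f x) sequentially"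
    by simp
  from fc_tendsto[OF sa this] have "(\<lambda>k. c *\<^sub>R op_poly (P k) T) \<longlonglongrightarrow> op_fc (\<lambda>x. c * f x) T"
    by (simp add: op_poly_smult)
  moreover have "(\<lambda>k. c *\<^sub>R op_poly (P k) T) \<longlonglongrightarrow> c *\<^sub>R op_fc f T"
    by (intro tendsto_scaleR tendsto_const P(2))
  ultimately show ?thesis using LIMSEQ_unique by blast
qed

lemma fc_mult:
  assumes f: "continuous_on K f" and g: "continuous_on K g"
  shows "op_fc (\<lambda>x. f x * g x) T = op_fc f T o\<^sub>L op_fc g T"
proof -
  obtain P where P: "uniform_limit (op_spectrum T) (\<lambda>k. poly (P k)) f sequentially"
    "(\<lambda>k. op_poly (P k) T) \<longlonglongrightarrow> op_fc f T" using fc_char[OF sa KT cK f] by blast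
  obtain Q where Q: "uniform_limit (op_spectrum T) (\<lambda>k. poly (Q k)) g sequentially"
    "(\<lambda>k. op_poly (Q k) T) \<longlonglongrightarrow> op_fc g T" using fc_char[OF sa KT cK g] by blast
  have "uniform_limit (op_spectrum T) (\<lambda>k x. poly (P k) x * poly (Q k) x) (\<lambda>x. f x * g x) sequentially"
    by (intro uniform_lim_mult P(1) Q(1) bounded_on_subset[OF cK f KT] bounded_on_subset[OF cK g KT])
  moreover have "(\<lambda>k. poly (P k * Q k)) = (\<lambda>k x. poly (P k) x * poly (Q k) x)" by (simp add: fun_eq_iff)
  ultimately have "uniform_limit (op_spectrum T) (\<lambda>k. poly (P k * Q k)) (\<lambda>x. f x * g x) sequentially"
    by simp
  from fc_tendsto[OF sa this] have "(\<lambda>k. op_poly (P k) T o\<^sub>L op_poly (Q k) T) \<longlonglongrightarrow> op_fc (\<lambda>x. f x * g x) T"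
    by (simp add: op_poly_mult)
  moreover have "(\<lambda>k. op_poly (P k) T o\<^sub>L op_poly (Q k) T) \<longlonglongrightarrow> (op_fc f T o\<^sub>L op_fc g T)"
    by (intro oc_tendsto P(2) Q(2))
  ultimately show ?thesis using LIMSEQ_unique by blast
qed

lemma fc_poly: "op_fc (poly p) T = op_poly p T"
proof -
  have "uniform_limit (op_spectrum T) (\<lambda>k. poly p) (poly p) sequentially" by (rule uniform_limit_const)
  from fc_tendsto[OF sa this] show ?thesis by (simp add: LIMSEQ_const_iff)
qed

lemma fc_const: "op_fc (\<lambda>x. c) T = c *\<^sub>R id_blinfun"
proof -
  have "poly [:c:] = (\<lambda>x::real. c)" by (rule ext) simp
  then show ?thesis using fc_poly[of "[:c:]"] by (simp add: op_poly_const)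
qed

lemma fc_id: "op_fc (\<lambda>x. x) T = T"
proof -
  have "op_fc (poly [:0, 1:]) T = T" using fc_poly[of "[:0,1:]"] by (simp add: op_poly_lin)
  moreover have "poly [:0, 1:] = (\<lambda>x::real. x)" by (rule ext) simp
  ultimately show ?thesis by simp
qed

lemma fc_cong:
  assumes "\<And>x. x \<in> op_spectrum T \<Longrightarrow> f x = g x"
  shows "op_fc f T = op_fc g T"
proof -
  have "uniform_limit (op_spectrum T) (\<lambda>k x. poly (P k) x) f sequentially =
        uniform_limit (op_spectrum T) (\<lambda>k x. poly (P k) x) g sequentially" for P
    by (rule uniform_limit_cong) (use assms in auto)
  then show ?thesis unfolding op_fc_def by simp
qed

lemma fc_sa:
  assumes f: "continuous_on K f"
  shows "op_selfadjoint (op_fc f T)"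
proof -
  obtain P where P: "(\<lambda>k. op_poly (P k) T) \<longlonglongrightarrow> op_fc f T" using fc_char[OF sa KT cK f] by blast
  show ?thesis using P by (rule sa_lim) (intro allI op_poly_sa sa)
qed

lemma fc_norm:
  assumes f: "continuous_on K f" and B: "0 \<le> B" and b: "\<And>x. x \<in> op_spectrum T \<Longrightarrow> \<bar>f x\<bar> \<le> B"
  shows "norm (op_fc f T) \<le> B"
proof (rule field_le_epsilon)
  fix e :: real assume e: "0 < e"
  obtain P where P: "uniform_limit (op_spectrum T) (\<lambda>k. poly (P k)) f sequentially"
    "(\<lambda>k. op_poly (P k) T) \<longlonglongrightarrow> op_fc f T" using fc_char[OF sa KT cK f] by blast
  have "eventually (\<lambda>k. \<forall>x\<in>op_spectrum T. dist (poly (P k) x) (f x) < e) sequentially"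
    using uniform_limitD[OF P(1) e] .
  then have "eventually (\<lambda>k. norm (op_poly (P k) T) \<le> B + e) sequentially"
  proof eventually_elim
    case (elim k)
    show ?case
    proof (rule op_poly_norm[OF sa])
      show "0 \<le> B + e" using B e by simp
      fix l assume l: "l \<in> op_spectrum T"
      then have "\<bar>poly (P k) l - f l\<bar> < e" using elim by (auto simp: dist_real_def)
      then show "\<bar>poly (P k) l\<bar> \<le> B + e" using b[OF l] by simp
    qed
  qed
  then show "norm (op_fc f T) \<le> B + e"
    by (intro tendsto_upperbound[OF tendsto_norm[OF P(2)]]) auto
qed

lemma fc_minus:
  assumes f: "continuous_on K f"
  shows "op_fc (\<lambda>x. - f x) T = - op_fc f T"
  using fc_scale[OF f, of "-1"] by simp

lemma fc_diff:
  assumes f: "continuous_on K f" and g: "continuous_on K g"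
  shows "op_fc (\<lambda>x. f x - g x) T = op_fc f T - op_fc g T"
proof -
  have g': "continuous_on K (\<lambda>x. - g x)" using g by (intro continuous_intros)
  have "op_fc (\<lambda>x. f x - g x) T = op_fc (\<lambda>x. f x + - g x) T" by simp
  also have "\<dots> = op_fc f T + op_fc (\<lambda>x. - g x) T" by (rule fc_add[OF f g'])
  finally show ?thesis using fc_minus[OF g] by simp
qed

lemma fc_sum:
  assumes "finite J" and f: "\<And>j. j \<in> J \<Longrightarrow> continuous_on K (f j)"
  shows "op_fc (\<lambda>x. \<Sum>j\<in>J. f j x) T = (\<Sum>j\<in>J. op_fc (f j) T)"
  using assms
proof (induct J rule: finite_induct)
  case empty then show ?case using fc_const[of 0] by simp
next
  case (insert j J)
  have "op_fc (\<lambda>x. \<Sum>j\<in>insert j J. f j x) T = op_fc (\<lambda>x. f j x + (\<Sum>j\<in>J. f j x)) T"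
    using insert by simp
  also have "\<dots> = op_fc (f j) T + op_fc (\<lambda>x. \<Sum>j\<in>J. f j x) T"
    using insert by (intro fc_add continuous_on_sum) auto
  finally show ?case using insert by simp
qed

lemma fc_inv:
  assumes f: "continuous_on K f" and g: "continuous_on K g" and fg: "\<And>x. x \<in> op_spectrum T \<Longrightarrow> f x * g x = 1"
  shows "op_invertible (op_fc f T)" "op_inv (op_fc f T) = op_fc g T"
proof -
  have "op_fc g T o\<^sub>L op_fc f T = op_fc (\<lambda>x. g x * f x) T" by (rule fc_mult[OF g f, symmetric])
  also have "\<dots> = op_fc (\<lambda>x. 1) T" by (rule fc_cong) (use fg in \<open>simp add: mult.commute\<close>)
  finally have a: "op_fc g T o\<^sub>L op_fc f T = id_blinfun" by (simp add: fc_const)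
  have "op_fc f T o\<^sub>L op_fc g T = op_fc (\<lambda>x. f x * g x) T" by (rule fc_mult[OF f g, symmetric])
  also have "\<dots> = op_fc (\<lambda>x. 1) T" by (rule fc_cong) (use fg in simp)
  finally have b: "op_fc f T o\<^sub>L op_fc g T = id_blinfun" by (simp add: fc_const)
  show "op_invertible (op_fc f T)" using a b by (rule op_invertibleI)
  show "op_inv (op_fc f T) = op_fc g T" using a b by (rule op_inv_eq)
qed

end

subsection \<open>Riemann sums for the logarithm\<close>

definition hh :: "real \<Rightarrow> real \<Rightarrow> real" where
  "hh u t = (t - 1) / (1 + u * (t - 1))"

definition RL :: "nat \<Rightarrow> real \<Rightarrow> real" where
  "RL N t = (\<Sum>k<N. hh (real k / real N) t) / real N"

definition RR :: "nat \<Rightarrow> real \<Rightarrow> real" where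
  "RR N t = (\<Sum>k<N. hh (real (Suc k) / real N) t) / real N"

lemma denom_pos:
  fixes u t :: real
  assumes "0 \<le> u" "u \<le> 1" "0 < t"
  shows "min 1 t \<le> 1 + u * (t - 1)"
proof -
  have "1 + u * (t - 1) = (1 - u) * 1 + u * t" by (simp add: algebra_simps)
  also have "\<dots> \<ge> (1 - u) * min 1 t + u * min 1 t"
    using assms by (intro add_mono mult_left_mono) auto
  finally show ?thesis by (simp add: algebra_simps)
qed

lemma denom_pos':
  fixes u t :: real
  assumes "0 \<le> u" "u \<le> 1" "0 < t"
  shows "0 < 1 + u * (t - 1)"
  using denom_pos[OF assms] assms(3) by linarith

lemma riemann_bounds:
  assumes t: "0 < t" and N: "0 < N"
  shows "0 \<le> RL N t - ln t" "RL N t - ln t \<le> (t - 1)^2 / (t * N)"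
    "0 \<le> ln t - RR N t" "ln t - RR N t \<le> (t - 1)^2 / (t * N)"
proof -
  define D where "D k = 1 + (real k / real N) * (t - 1)" for k
  have Dpos: "0 < D k" if "k \<le> N" for k
    unfolding D_def using that N t by (intro denom_pos') (auto simp: field_simps)
  have hD: "hh (real k / real N) t = (t - 1) / D k" for k by (simp add: hh_def D_def)
  have DS: "D (Suc k) = D k + (t - 1) / N" for k using N by (simp add: D_def field_simps)
  define \<Delta> where "\<Delta> k = ln (D (Suc k)) - ln (D k)" for k
  have up: "\<Delta> k \<le> hh (real k / real N) t / N" and lo: "hh (real (Suc k) / real N) t / N \<le> \<Delta> k"
    if k: "k < N" for k
  proof -
    have p0: "0 < D k" "0 < D (Suc k)" using Dpos k by auto
    define y where "y = D (Suc k) / D k"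
    have y0: "0 < y" using p0 by (simp add: y_def)
    have dy: "\<Delta> k = ln y" using p0 by (simp add: \<Delta>_def y_def ln_div)
    have BA: "D (Suc k) - D k = (t - 1) / N" using DS[of k] by simp
    have "y - 1 = (D (Suc k) - D k) / D k" using p0 by (simp add: y_def field_simps)
    also have "\<dots> = hh (real k / real N) t / N" unfolding BA hD by simp
    finally have y1: "y - 1 = hh (real k / real N) t / N" .
    have "ln y \<le> y - 1" using y0 by (rule ln_le_minus_one)
    also have "\<dots> = hh (real k / real N) t / N" by (rule y1)
    finally show "\<Delta> k \<le> hh (real k / real N) t / N" using dy by simp
    have "ln (1/y) \<le> 1/y - 1" using y0 by (intro ln_le_minus_one) simp
    then have "1 - 1/y \<le> ln y" using y0 by (simp add: ln_div)
    moreover have "1 - 1/y = hh (real (Suc k) / real N) t / N"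
    proof -
      have "1 - 1/y = (D (Suc k) - D k) / D (Suc k)" using p0 by (simp add: y_def field_simps)
      also have "\<dots> = hh (real (Suc k) / real N) t / N" unfolding BA hD by simp
      finally show ?thesis .
    qed
    ultimately show "hh (real (Suc k) / real N) t / N \<le> \<Delta> k" using dy by simp
  qed
  have tel: "(\<Sum>k<N. \<Delta> k) = ln t"
  proof -
    have "(\<Sum>k<N. \<Delta> k) = ln (D N) - ln (D 0)" unfolding \<Delta>_def by (rule sum_lessThan_telescope)
    moreover have "D N = t" "D 0 = 1" using N by (auto simp: D_def)
    ultimately show ?thesis by simp
  qed
  have tel2: "(\<Sum>k<N. hh (real k / real N) t / N - hh (real (Suc k) / real N) t / N) = (t - 1)^2 / (t * N)"
  proof -
    have "(\<Sum>k<N. hh (real k / real N) t / N - hh (real (Suc k) / real N) t / N)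
        = hh (real 0 / real N) t / N - hh (real N / real N) t / N"
      by (rule sum_lessThan_telescope'[where f = "\<lambda>k. hh (real k / real N) t / N"])
    also have "\<dots> = (t - 1)^2 / (t * N)" using N t by (simp add: hh_def field_simps power2_eq_square)
    finally show ?thesis .
  qed
  have RLs: "RL N t - ln t = (\<Sum>k<N. hh (real k / real N) t / N - \<Delta> k)"
    by (simp add: RL_def sum_subtractf tel sum_divide_distrib)
  have RRs: "ln t - RR N t = (\<Sum>k<N. \<Delta> k - hh (real (Suc k) / real N) t / N)"
    by (simp add: RR_def sum_subtractf tel sum_divide_distrib)
  show "0 \<le> RL N t - ln t" unfolding RLs by (intro sum_nonneg) (use up in auto)
  show "RL N t - ln t \<le> (t - 1)^2 / (t * N)" unfolding RLs tel2[symmetric]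
    by (intro sum_mono) (use lo in auto)
  show "0 \<le> ln t - RR N t" unfolding RRs by (intro sum_nonneg) (use lo in auto)
  show "ln t - RR N t \<le> (t - 1)^2 / (t * N)" unfolding RRs tel2[symmetric]
    by (intro sum_mono) (use up in auto)
qed

lemma cont_hh:
  assumes "0 \<le> u" "u \<le> 1" "0 < a"
  shows "continuous_on {a..b} (hh u)"
proof -
  have "\<forall>t\<in>{a..b}. 1 + u * (t - 1) \<noteq> 0"
  proof
    fix t assume "t \<in> {a..b}"
    then have "0 < t" using assms by simp
    then show "1 + u * (t - 1) \<noteq> 0" using denom_pos'[OF assms(1,2)] by (metis less_irrefl)
  qed
  then show ?thesis unfolding hh_def by (intro continuous_intros) auto
qed

lemma cont_RL: "0 < (a::real) \<Longrightarrow> continuous_on {a..b} (RL N)"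
proof -
  assume a: "0 < a"
  have *: "continuous_on {a..b} (hh (real k / real N))" if "k \<in> {..<N}" for k
    using that a by (intro cont_hh) (auto simp: divide_simps)
  show ?thesis
  proof (cases "N = 0")
    case True then show ?thesis by (simp add: RL_def)
  next
    case False then show ?thesis using * unfolding RL_def by (intro continuous_intros continuous_on_sum) auto
  qed
qed

lemma cont_RR: "0 < (a::real) \<Longrightarrow> continuous_on {a..b} (RR N)"
proof -
  assume a: "0 < a"
  have *: "continuous_on {a..b} (hh (real (Suc k) / real N))" if "k \<in> {..<N}" for k
    using that a by (intro cont_hh) (auto simp: divide_simps)
  show ?thesis
  proof (cases "N = 0")
    case True then show ?thesis by (simp add: RR_def)
  next
    case False then show ?thesis using * unfolding RR_def by (intro continuous_intros continuous_on_sum) auto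
  qed
qed

lemma cont_ln: "0 < (a::real) \<Longrightarrow> continuous_on {a..b} ln"
  using continuous_on_ln[OF continuous_on_id, of "{a..b}"] by auto

lemma fc_ln_limit:
  fixes X :: "'a::{real_inner,complete_space} \<Rightarrow>\<^sub>L 'a" and a b c :: real
  assumes sa: "op_selfadjoint X" and sp: "op_spectrum X \<subseteq> {a..b}" and a: "0 < a"
    and F: "\<And>N. continuous_on {a..b} (F N)"
    and c0: "0 \<le> c" and Fb: "\<And>N t. t \<in> {a..b} \<Longrightarrow> \<bar>F (Suc N) t - ln t\<bar> \<le> c / real (Suc N)"
  shows "(\<lambda>N. op_fc (F (Suc N)) X) \<longlonglongrightarrow> op_fc ln X"
proof -
  have cK: "compact {a..b}" by simp
  have "(\<lambda>N. op_fc (F (Suc N)) X - op_fc ln X) \<longlonglongrightarrow> 0"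
  proof (rule Lim_null_comparison)
    show "\<forall>\<^sub>F N in sequentially. norm (op_fc (F (Suc N)) X - op_fc ln X) \<le> c / real (Suc N)"
    proof (intro always_eventually allI)
      fix N
      have "op_fc (F (Suc N)) X - op_fc ln X = op_fc (\<lambda>t. F (Suc N) t - ln t) X"
        by (rule fc_diff[OF sa sp cK F cont_ln[OF a], symmetric])
      also have "norm \<dots> \<le> c / real (Suc N)"
        using sp c0 by (intro fc_norm[OF sa sp cK] continuous_intros F cont_ln[OF a] Fb) auto
      finally show "norm (op_fc (F (Suc N)) X - op_fc ln X) \<le> c / real (Suc N)" .
    qed
    show "(\<lambda>N. c / real (Suc N)) \<longlonglongrightarrow> 0"
      using LIMSEQ_Suc[OF lim_const_over_n[of c]] by simp
  qed
  then have "(\<lambda>N. (op_fc (F (Suc N)) X - op_fc ln X) + op_fc ln X) \<longlonglongrightarrow> 0 + op_fc ln X"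
    by (intro tendsto_add tendsto_const)
  then show ?thesis by simp
qed

definition qlb :: "('a::real_inner \<Rightarrow>\<^sub>L 'a) \<Rightarrow> real \<Rightarrow> bool" where
  "qlb X a \<longleftrightarrow> (\<forall>x. a * (norm x)^2 \<le> inner (X x) x)"

lemma spec_qlb:
  fixes X :: "'a::{real_inner,complete_space} \<Rightarrow>\<^sub>L 'a"
  assumes "op_selfadjoint X" "qlb X a"
  shows "op_spectrum X \<subseteq> {a..norm X}"
  by (rule spec_bound[OF assms(1)]) (use assms(2) inner_op_le_norm in \<open>auto simp: qlb_def abs_le_iff\<close>)

lemma qlb_invertible:
  fixes X :: "'a::{real_inner,complete_space} \<Rightarrow>\<^sub>L 'a"
  assumes "op_selfadjoint X" "qlb X a" "0 < a"
  shows "op_invertible X"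
  using sa_qlb_invertible[OF assms(1,3)] assms(2) by (auto simp: qlb_def)

lemma qlb_mono: "qlb X a \<Longrightarrow> b \<le> a \<Longrightarrow> qlb X b"
  unfolding qlb_def by (meson mult_right_mono order_trans zero_le_power2)

lemma E_formula:
  fixes X :: "'a::{real_inner,complete_space} \<Rightarrow>\<^sub>L 'a"
  assumes sa: "op_selfadjoint X" and q: "qlb X a" and a: "0 < a" and u: "0 \<le> u" "u \<le> 1"
  shows "op_invertible (id_blinfun + u *\<^sub>R (X - id_blinfun))"
    "op_fc (hh u) X = (X - id_blinfun) o\<^sub>L op_inv (id_blinfun + u *\<^sub>R (X - id_blinfun))"
proof -
  define K where "K = {a..norm X}"
  have sp: "op_spectrum X \<subseteq> K" unfolding K_def by (rule spec_qlb[OF sa q])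
  have cK: "compact K" by (simp add: K_def)
  define D where "D t = 1 + u * (t - 1)" for t
  have Dpos: "0 < D t" if "t \<in> K" for t
    using that a u unfolding D_def K_def by (intro denom_pos') auto
  have cD: "continuous_on K D" unfolding D_def by (intro continuous_intros)
  have cG: "continuous_on K (\<lambda>t. 1 / D t)"
    by (intro continuous_intros cD) (use Dpos in \<open>auto simp: less_imp_neq[symmetric]\<close>)
  have "D = poly [:1 - u, u:]" by (rule ext) (simp add: D_def algebra_simps)
  then have "op_fc D X = op_poly [:1 - u, u:] X" using fc_poly[OF sa sp cK] by simp
  also have "\<dots> = id_blinfun + u *\<^sub>R (X - id_blinfun)"
    by (simp add: op_poly_lin algebra_simps scaleR_diff_right)
  finally have fD: "op_fc D X = id_blinfun + u *\<^sub>R (X - id_blinfun)" .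
  have DG: "D t * (1 / D t) = 1" if "t \<in> op_spectrum X" for t using Dpos[of t] that sp by auto
  show "op_invertible (id_blinfun + u *\<^sub>R (X - id_blinfun))"
    using fc_inv(1)[OF sa sp cK cD cG DG] fD by simp
  have iD: "op_inv (id_blinfun + u *\<^sub>R (X - id_blinfun)) = op_fc (\<lambda>t. 1 / D t) X"
    using fc_inv(2)[OF sa sp cK cD cG DG] fD by simp
  have c1: "continuous_on K (\<lambda>t. t - 1)" by (intro continuous_intros)
  have "hh u = (\<lambda>t. (t - 1) * (1 / D t))" by (rule ext) (simp add: hh_def D_def)
  then have "op_fc (hh u) X = op_fc (\<lambda>t. t - 1) X o\<^sub>L op_fc (\<lambda>t. 1 / D t) X"
    using fc_mult[OF sa sp cK c1 cG] by simp
  also have "op_fc (\<lambda>t. t - 1) X = X - id_blinfun"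
    using fc_diff[OF sa sp cK continuous_on_id continuous_on_const] fc_id[OF sa sp cK] fc_const[OF sa sp cK]
    by simp
  finally show "op_fc (hh u) X = (X - id_blinfun) o\<^sub>L op_inv (id_blinfun + u *\<^sub>R (X - id_blinfun))"
    using iD by simp
qed

lemma sandwich_sum_qlb:
  fixes C X :: "nat \<Rightarrow> 'a::real_inner \<Rightarrow>\<^sub>L 'a"
  assumes saC: "\<And>j. j \<in> J \<Longrightarrow> op_selfadjoint (C j)" and CC: "(\<Sum>j\<in>J. C j o\<^sub>L C j) = id_blinfun"
    and q: "\<And>j. j \<in> J \<Longrightarrow> qlb (X j) a"
  shows "qlb (\<Sum>j\<in>J. (C j o\<^sub>L X j) o\<^sub>L C j) a"
  unfolding qlb_def
proof
  fix x
  have e1: "inner (((C j o\<^sub>L X j) o\<^sub>L C j) x) x = inner (X j (C j x)) (C j x)" if "j \<in> J" for j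
    using saC[OF that] unfolding op_selfadjoint_def by simp
  have e2: "inner (C j x) (C j x) = inner ((C j o\<^sub>L C j) x) x" if "j \<in> J" for j
    using saC[OF that] unfolding op_selfadjoint_def by (simp add: inner_commute)
  have "a * (norm x)^2 = a * inner x x" by (simp add: power2_norm_eq_inner)
  also have "inner x x = inner ((\<Sum>j\<in>J. C j o\<^sub>L C j) x) x" using CC by simp
  also have "\<dots> = (\<Sum>j\<in>J. inner (C j x) (C j x))" by (simp add: blinfun.sum_left inner_sum_left e2)
  also have "a * \<dots> = (\<Sum>j\<in>J. a * (norm (C j x))^2)" by (simp add: sum_distrib_left power2_norm_eq_inner)
  also have "\<dots> \<le> (\<Sum>j\<in>J. inner (X j (C j x)) (C j x))"
    using q by (intro sum_mono) (auto simp: qlb_def)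
  also have "\<dots> = inner ((\<Sum>j\<in>J. (C j o\<^sub>L X j) o\<^sub>L C j) x) x"
    by (simp add: blinfun.sum_left inner_sum_left e1 del: blinfun_apply_blinfun_compose)
  finally show "a * (norm x)^2 \<le> inner ((\<Sum>j\<in>J. (C j o\<^sub>L X j) o\<^sub>L C j) x) x" .
qed

lemma sa_sandwich_sum:
  assumes "\<And>j. j \<in> J \<Longrightarrow> op_selfadjoint (C j)" "\<And>j. j \<in> J \<Longrightarrow> op_selfadjoint (X j)"
  shows "op_selfadjoint (\<Sum>j\<in>J. (C j o\<^sub>L X j) o\<^sub>L C j)"
  using assms by (intro sa_sum sa_sandwich) auto

lemma jensen_inv:
  fixes C Y :: "nat \<Rightarrow> 'a::{real_inner,complete_space} \<Rightarrow>\<^sub>L 'a"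
  assumes saC: "\<And>j. j \<in> J \<Longrightarrow> op_selfadjoint (C j)" and CC: "(\<Sum>j\<in>J. C j o\<^sub>L C j) = id_blinfun"
    and saY: "\<And>j. j \<in> J \<Longrightarrow> op_selfadjoint (Y j)" and qY: "\<And>j. j \<in> J \<Longrightarrow> qlb (Y j) c" and c: "0 < c"
  shows "op_invertible (\<Sum>j\<in>J. (C j o\<^sub>L Y j) o\<^sub>L C j)"
    "op_le (op_inv (\<Sum>j\<in>J. (C j o\<^sub>L Y j) o\<^sub>L C j)) (\<Sum>j\<in>J. (C j o\<^sub>L op_inv (Y j)) o\<^sub>L C j)"
proof -
  define Z where "Z = (\<Sum>j\<in>J. (C j o\<^sub>L Y j) o\<^sub>L C j)"
  define W where "W = (\<Sum>j\<in>J. (C j o\<^sub>L op_inv (Y j)) o\<^sub>L C j)"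
  have invY: "op_invertible (Y j)" if "j \<in> J" for j using qlb_invertible[OF saY qY c] that by blast
  have saZ: "op_selfadjoint Z" unfolding Z_def by (intro sa_sandwich_sum saC saY)
  have qZ: "qlb Z c" unfolding Z_def by (rule sandwich_sum_qlb[OF saC CC qY])
  show invZ: "op_invertible (\<Sum>j\<in>J. (C j o\<^sub>L Y j) o\<^sub>L C j)"
    using qlb_invertible[OF saZ qZ c] by (simp add: Z_def)
  then have invZ': "op_invertible Z" by (simp add: Z_def)
  have saW: "op_selfadjoint W" unfolding W_def by (intro sa_sandwich_sum saC sa_inv saY invY)
  have saZi: "op_selfadjoint (op_inv Z)" by (rule sa_inv[OF saZ invZ'])
  have "op_le (op_inv Z) W"
    unfolding op_le_iff
  proof (intro conjI allI)
    show "op_selfadjoint (W - op_inv Z)" by (intro sa_diff saW saZi)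
    fix x
    define v where "v = op_inv Z x"
    have Zv: "Z v = x" by (simp add: v_def op_inv_apply invZ')
    define w where "w j = op_inv (Y j) (C j x) - C j v" for j
    have symC: "inner (C j p) q = inner p (C j q)" if "j \<in> J" for j p q
      using saC[OF that] unfolding op_selfadjoint_def by blast
    have symY: "inner (Y j p) q = inner p (Y j q)" if "j \<in> J" for j p q
      using saY[OF that] unfolding op_selfadjoint_def by blast
    have trm: "inner (Y j (w j)) (w j) =
        inner (((C j o\<^sub>L op_inv (Y j)) o\<^sub>L C j) x) x - 2 * inner (C j (C j x)) v
        + inner (((C j o\<^sub>L Y j) o\<^sub>L C j) v) v" if j: "j \<in> J" for j
    proof -
      have YYi: "Y j (op_inv (Y j) p) = p" for p by (simp add: op_inv_apply invY[OF j])
      have "inner (Y j (w j)) (w j) = inner (C j x - Y j (C j v)) (op_inv (Y j) (C j x) - C j v)"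
        by (simp add: w_def opsimps YYi)
      also have "\<dots> = inner (C j x) (op_inv (Y j) (C j x)) - inner (C j x) (C j v)
          - inner (Y j (C j v)) (op_inv (Y j) (C j x)) + inner (Y j (C j v)) (C j v)"
        by (simp add: inner_diff_left inner_diff_right algebra_simps)
      also have "inner (Y j (C j v)) (op_inv (Y j) (C j x)) = inner (C j v) (C j x)"
        using symY[OF j] YYi by metis
      also have "inner (C j x) (op_inv (Y j) (C j x)) = inner (((C j o\<^sub>L op_inv (Y j)) o\<^sub>L C j) x) x"
        using symC[OF j, of x "op_inv (Y j) (C j x)"] by (simp add: inner_commute)
      also have "inner (C j x) (C j v) = inner (C j (C j x)) v" using symC[OF j] by simp
      also have "inner (C j v) (C j x) = inner (C j (C j x)) v"
        using symC[OF j, of v "C j x"] by (simp add: inner_commute)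
      also have "inner (Y j (C j v)) (C j v) = inner (((C j o\<^sub>L Y j) o\<^sub>L C j) v) v"
        using symC[OF j, of "Y j (C j v)" v] by (simp add: inner_commute)
      finally show ?thesis by simp
    qed
    have "0 \<le> (\<Sum>j\<in>J. inner (Y j (w j)) (w j))"
    proof (intro sum_nonneg)
      fix j assume j: "j \<in> J"
      have "c * (norm (w j))^2 \<le> inner (Y j (w j)) (w j)" using qY[OF j] by (simp add: qlb_def)
      moreover have "0 \<le> c * (norm (w j))^2" using c by simp
      ultimately show "0 \<le> inner (Y j (w j)) (w j)" by linarith
    qed
    also have "\<dots> = (\<Sum>j\<in>J. inner (((C j o\<^sub>L op_inv (Y j)) o\<^sub>L C j) x) x)
        - 2 * (\<Sum>j\<in>J. inner (C j (C j x)) v) + (\<Sum>j\<in>J. inner (((C j o\<^sub>L Y j) o\<^sub>L C j) v) v)"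
      by (simp add: trm sum.distrib sum_subtractf sum_distrib_left)
    also have "(\<Sum>j\<in>J. inner (((C j o\<^sub>L op_inv (Y j)) o\<^sub>L C j) x) x) = inner (W x) x"
      by (simp add: W_def blinfun.sum_left inner_sum_left del: blinfun_apply_blinfun_compose)
    also have "(\<Sum>j\<in>J. inner (((C j o\<^sub>L Y j) o\<^sub>L C j) v) v) = inner (Z v) v"
      by (simp add: Z_def blinfun.sum_left inner_sum_left del: blinfun_apply_blinfun_compose)
    also have "(\<Sum>j\<in>J. inner (C j (C j x)) v) = inner ((\<Sum>j\<in>J. C j o\<^sub>L C j) x) v"
      by (simp add: blinfun.sum_left inner_sum_left)
    also have "\<dots> = inner x v" using CC by simp
    finally have "0 \<le> inner (W x) x - 2 * inner x v + inner x v" using Zv by simp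
    then show "inner (op_inv Z x) x \<le> inner (W x) x" by (simp add: v_def inner_commute)
  qed
  then show "op_le (op_inv (\<Sum>j\<in>J. (C j o\<^sub>L Y j) o\<^sub>L C j)) (\<Sum>j\<in>J. (C j o\<^sub>L op_inv (Y j)) o\<^sub>L C j)"
    by (simp add: Z_def W_def)
qed

lemma hh_form:
  fixes X :: "'a::{real_inner,complete_space} \<Rightarrow>\<^sub>L 'a"
  assumes sa: "op_selfadjoint X" and q: "qlb X a" and a: "0 < a" and u: "0 < u" "u \<le> 1"
  shows "op_fc (hh u) X = (1/u) *\<^sub>R (id_blinfun - op_inv (id_blinfun + u *\<^sub>R (X - id_blinfun)))"
proof -
  define Y where "Y = id_blinfun + u *\<^sub>R (X - id_blinfun)"
  have invY: "op_invertible Y" using E_formula(1)[OF sa q a] u by (simp add: Y_def)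
  have f: "op_fc (hh u) X = (X - id_blinfun) o\<^sub>L op_inv Y" using E_formula(2)[OF sa q a] u by (simp add: Y_def)
  have XY: "X - id_blinfun = (1/u) *\<^sub>R (Y - id_blinfun)" using u by (simp add: Y_def)
  have "(X - id_blinfun) o\<^sub>L op_inv Y = (1/u) *\<^sub>R ((Y o\<^sub>L op_inv Y) - op_inv Y)"
    unfolding XY oc_scale_left oc_diff_left oc_id_left ..
  also have "Y o\<^sub>L op_inv Y = id_blinfun" using op_inv_props[OF invY] by simp
  finally show ?thesis using f by (simp add: Y_def)
qed

lemma qlb_Y:
  fixes X :: "'a::{real_inner,complete_space} \<Rightarrow>\<^sub>L 'a"
  assumes q: "qlb X a" and a: "0 < a" and u: "0 \<le> u" "u \<le> 1"
  shows "qlb (id_blinfun + u *\<^sub>R (X - id_blinfun)) (min 1 a)"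
  unfolding qlb_def
proof
  fix x
  have "inner ((id_blinfun + u *\<^sub>R (X - id_blinfun)) x) x = (1 - u) * (norm x)^2 + u * inner (X x) x"
    by (simp add: opsimps inner_add_left inner_diff_left power2_norm_eq_inner algebra_simps)
  also have "\<dots> \<ge> (1 - u) * (norm x)^2 + u * (a * (norm x)^2)"
    using q u unfolding qlb_def by (intro add_left_mono mult_left_mono) auto
  finally have *: "(1 - u) * (norm x)^2 + u * (a * (norm x)^2) \<le> inner ((id_blinfun + u *\<^sub>R (X - id_blinfun)) x) x" .
  have "min 1 a * (norm x)^2 = (1 - u) * (min 1 a * (norm x)^2) + u * (min 1 a * (norm x)^2)"
    by (simp add: algebra_simps)
  also have "\<dots> \<le> (1 - u) * (norm x)^2 + u * (a * (norm x)^2)"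
  proof -
    have m1: "min 1 a * (norm x)^2 \<le> 1 * (norm x)^2" by (intro mult_right_mono) auto
    have m2: "min 1 a * (norm x)^2 \<le> a * (norm x)^2" by (intro mult_right_mono) auto
    show ?thesis using u m1 m2 by (intro add_mono mult_left_mono) auto
  qed
  finally show "min 1 a * (norm x)^2 \<le> inner ((id_blinfun + u *\<^sub>R (X - id_blinfun)) x) x" using * by linarith
qed

lemma jensen_hh:
  fixes C X :: "nat \<Rightarrow> 'a::{real_inner,complete_space} \<Rightarrow>\<^sub>L 'a"
  assumes saC: "\<And>j. j \<in> J \<Longrightarrow> op_selfadjoint (C j)" and CC: "(\<Sum>j\<in>J. C j o\<^sub>L C j) = id_blinfun"
    and saX: "\<And>j. j \<in> J \<Longrightarrow> op_selfadjoint (X j)" and qX: "\<And>j. j \<in> J \<Longrightarrow> qlb (X j) a"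
    and a: "0 < a" and u: "0 \<le> u" "u \<le> 1"
  shows "op_le (\<Sum>j\<in>J. (C j o\<^sub>L op_fc (hh u) (X j)) o\<^sub>L C j) (op_fc (hh u) (\<Sum>j\<in>J. (C j o\<^sub>L X j) o\<^sub>L C j))"
proof -
  define W where "W = (\<Sum>j\<in>J. (C j o\<^sub>L X j) o\<^sub>L C j)"
  have saW: "op_selfadjoint W" unfolding W_def by (intro sa_sandwich_sum saC saX)
  have qW: "qlb W a" unfolding W_def by (rule sandwich_sum_qlb[OF saC CC qX])
  define Y where "Y j = id_blinfun + u *\<^sub>R (X j - id_blinfun)" for j
  define YW where "YW = id_blinfun + u *\<^sub>R (W - id_blinfun)"
  have CYC: "(C j o\<^sub>L Y j) o\<^sub>L C j = (C j o\<^sub>L C j) + u *\<^sub>R (((C j o\<^sub>L X j) o\<^sub>L C j) - (C j o\<^sub>L C j))" for j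
    by (rule blinfun_eqI) (simp add: Y_def opsimps algebra_simps)
  have sumCYC: "(\<Sum>j\<in>J. (C j o\<^sub>L Y j) o\<^sub>L C j) = YW"
    unfolding CYC YW_def W_def by (simp add: sum.distrib scaleR_sum_right[symmetric] sum_subtractf CC)
  show ?thesis
  proof (cases "u = 0")
    case True
    have h0: "op_fc (hh 0) Z = Z - id_blinfun" if "op_selfadjoint Z" "qlb Z a" for Z :: "'a \<Rightarrow>\<^sub>L 'a"
      using E_formula(2)[OF that a, of 0] by simp
    have "(\<Sum>j\<in>J. (C j o\<^sub>L op_fc (hh u) (X j)) o\<^sub>L C j) = (\<Sum>j\<in>J. ((C j o\<^sub>L X j) o\<^sub>L C j) - (C j o\<^sub>L C j))"
      using True h0 saX qX by (intro sum.cong) (auto simp: ocsimps oc_assoc)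
    also have "\<dots> = W - id_blinfun" by (simp add: sum_subtractf CC W_def)
    also have "\<dots> = op_fc (hh u) W" using True h0[OF saW qW] by simp
    finally show ?thesis by (simp add: W_def op_le_refl)
  next
    case False
    then have u0: "0 < u" using u by simp
    have Fj: "op_fc (hh u) (X j) = (1/u) *\<^sub>R (id_blinfun - op_inv (Y j))" if "j \<in> J" for j
      unfolding Y_def by (rule hh_form[OF saX[OF that] qX[OF that] a u0 u(2)])
    have FW: "op_fc (hh u) W = (1/u) *\<^sub>R (id_blinfun - op_inv YW)"
      unfolding YW_def by (rule hh_form[OF saW qW a u0 u(2)])
    have saY: "op_selfadjoint (Y j)" if "j \<in> J" for j unfolding Y_def
      by (intro sa_add sa_id sa_scale sa_diff saX that)
    have qY: "qlb (Y j) (min 1 a)" if "j \<in> J" for j unfolding Y_def by (rule qlb_Y[OF qX[OF that] a u])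
    have J: "op_le (op_inv YW) (\<Sum>j\<in>J. (C j o\<^sub>L op_inv (Y j)) o\<^sub>L C j)"
      using jensen_inv(2)[where Y=Y and c="min 1 a" and J=J and C=C, OF saC CC saY qY] a sumCYC by simp
    have "(\<Sum>j\<in>J. (C j o\<^sub>L op_fc (hh u) (X j)) o\<^sub>L C j)
        = (\<Sum>j\<in>J. (1/u) *\<^sub>R ((C j o\<^sub>L C j) - ((C j o\<^sub>L op_inv (Y j)) o\<^sub>L C j)))"
      by (intro sum.cong) (auto simp: Fj ocsimps oc_assoc)
    also have "\<dots> = (1/u) *\<^sub>R (id_blinfun - (\<Sum>j\<in>J. (C j o\<^sub>L op_inv (Y j)) o\<^sub>L C j))"
      by (simp add: scaleR_sum_right[symmetric] sum_subtractf CC)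
    finally have L: "(\<Sum>j\<in>J. (C j o\<^sub>L op_fc (hh u) (X j)) o\<^sub>L C j)
        = (1/u) *\<^sub>R (id_blinfun - (\<Sum>j\<in>J. (C j o\<^sub>L op_inv (Y j)) o\<^sub>L C j))" .
    have "op_le (id_blinfun + - (\<Sum>j\<in>J. (C j o\<^sub>L op_inv (Y j)) o\<^sub>L C j)) (id_blinfun + - op_inv YW)"
      by (intro op_le_add op_le_refl op_le_neg J)
    then have "op_le ((1/u) *\<^sub>R (id_blinfun - (\<Sum>j\<in>J. (C j o\<^sub>L op_inv (Y j)) o\<^sub>L C j)))
                     ((1/u) *\<^sub>R (id_blinfun - op_inv YW))"
      using u0 by (intro op_le_scale) auto
    then show ?thesis unfolding L FW[symmetric] W_def .
  qed
qed

lemma RL_eq: "RL M = (\<lambda>t. (1 / real M) * (\<Sum>k<M. hh (real k / real M) t))"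
  by (rule ext) (simp add: RL_def)

lemma RR_eq: "RR M = (\<lambda>t. (1 / real M) * (\<Sum>k<M. hh (real (Suc k) / real M) t))"
  by (rule ext) (simp add: RR_def)

lemma RL_sum:
  fixes X :: "'a::{real_inner,complete_space} \<Rightarrow>\<^sub>L 'a"
  assumes sa: "op_selfadjoint X" and q: "qlb X a" and a: "0 < a"
  shows "op_fc (RL M) X = (1 / real M) *\<^sub>R (\<Sum>k<M. op_fc (hh (real k / real M)) X)"
proof -
  have sp: "op_spectrum X \<subseteq> {a..norm X}" by (rule spec_qlb[OF sa q])
  have c: "continuous_on {a..norm X} (hh (real k / real M))" if "k \<in> {..<M}" for k
    using that a by (intro cont_hh) (auto simp: divide_simps)
  have cs: "continuous_on {a..norm X} (\<lambda>t. \<Sum>k<M. hh (real k / real M) t)"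
    using c by (intro continuous_on_sum) auto
  have "op_fc (\<lambda>t. (1 / real M) * (\<Sum>k<M. hh (real k / real M) t)) X = (1 / real M) *\<^sub>R op_fc (\<lambda>t. \<Sum>k<M. hh (real k / real M) t) X"
    by (rule fc_scale[OF sa sp compact_Icc cs])
  also have "op_fc (\<lambda>t. \<Sum>k<M. hh (real k / real M) t) X = (\<Sum>k<M. op_fc (hh (real k / real M)) X)"
    by (rule fc_sum[OF sa sp compact_Icc _ c]) simp
  finally show ?thesis unfolding RL_eq .
qed

lemma RR_sum:
  fixes X :: "'a::{real_inner,complete_space} \<Rightarrow>\<^sub>L 'a"
  assumes sa: "op_selfadjoint X" and q: "qlb X a" and a: "0 < a"
  shows "op_fc (RR M) X = (1 / real M) *\<^sub>R (\<Sum>k<M. op_fc (hh (real (Suc k) / real M)) X)"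
proof -
  have sp: "op_spectrum X \<subseteq> {a..norm X}" by (rule spec_qlb[OF sa q])
  have c: "continuous_on {a..norm X} (hh (real (Suc k) / real M))" if "k \<in> {..<M}" for k
    using that a by (intro cont_hh) (auto simp: divide_simps)
  have cs: "continuous_on {a..norm X} (\<lambda>t. \<Sum>k<M. hh (real (Suc k) / real M) t)"
    using c by (intro continuous_on_sum) auto
  have "op_fc (\<lambda>t. (1 / real M) * (\<Sum>k<M. hh (real (Suc k) / real M) t)) X = (1 / real M) *\<^sub>R op_fc (\<lambda>t. \<Sum>k<M. hh (real (Suc k) / real M) t) X"
    by (rule fc_scale[OF sa sp compact_Icc cs])
  also have "op_fc (\<lambda>t. \<Sum>k<M. hh (real (Suc k) / real M) t) X = (\<Sum>k<M. op_fc (hh (real (Suc k) / real M)) X)"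
    by (rule fc_sum[OF sa sp compact_Icc _ c]) simp
  finally show ?thesis unfolding RR_eq .
qed

lemma riemann_unif:
  fixes a b t :: real
  assumes a: "0 < a" and t: "t \<in> {a..b}"
  shows "\<bar>RL (Suc N) t - ln t\<bar> \<le> ((b + 1)^2 / a) / real (Suc N)"
    "\<bar>RR (Suc N) t - ln t\<bar> \<le> ((b + 1)^2 / a) / real (Suc N)"
proof -
  have t0: "0 < t" using a t by simp
  have "(t - 1)^2 \<le> (b + 1)^2"
  proof -
    have "\<bar>t - 1\<bar> \<le> b + 1" using t t0 by auto
    then have "\<bar>t - 1\<bar>^2 \<le> (b + 1)^2" by (intro power_mono) auto
    then show ?thesis by simp
  qed
  then have "(t - 1)^2 / (t * real (Suc N)) \<le> (b + 1)^2 / (a * real (Suc N))"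
    using a t t0 by (intro frac_le) (auto intro: mult_right_mono)
  also have "\<dots> = ((b + 1)^2 / a) / real (Suc N)" by simp
  finally have B: "(t - 1)^2 / (t * real (Suc N)) \<le> ((b + 1)^2 / a) / real (Suc N)" .
  have N: "0 < Suc N" by simp
  note rb = riemann_bounds[OF t0 N]
  show "\<bar>RL (Suc N) t - ln t\<bar> \<le> ((b + 1)^2 / a) / real (Suc N)" using rb(1,2) B by linarith
  show "\<bar>RR (Suc N) t - ln t\<bar> \<le> ((b + 1)^2 / a) / real (Suc N)" using rb(3,4) B by linarith
qed

lemma RL_limit:
  fixes X :: "'a::{real_inner,complete_space} \<Rightarrow>\<^sub>L 'a"
  assumes sa: "op_selfadjoint X" and q: "qlb X a" and a: "0 < a"
  shows "(\<lambda>N. op_fc (RL (Suc N)) X) \<longlonglongrightarrow> op_fc ln X"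
  by (rule fc_ln_limit[OF sa spec_qlb[OF sa q] a cont_RL[OF a], of "(norm X + 1)^2 / a"])
     (use a riemann_unif(1)[OF a] in auto)

lemma RR_limit:
  fixes X :: "'a::{real_inner,complete_space} \<Rightarrow>\<^sub>L 'a"
  assumes sa: "op_selfadjoint X" and q: "qlb X a" and a: "0 < a"
  shows "(\<lambda>N. op_fc (RR (Suc N)) X) \<longlonglongrightarrow> op_fc ln X"
  by (rule fc_ln_limit[OF sa spec_qlb[OF sa q] a cont_RR[OF a], of "(norm X + 1)^2 / a"])
     (use a riemann_unif(2)[OF a] in auto)

lemma jensen_ln:
  fixes C X :: "nat \<Rightarrow> 'a::{real_inner,complete_space} \<Rightarrow>\<^sub>L 'a"
  assumes fin: "finite J" and saC: "\<And>j. j \<in> J \<Longrightarrow> op_selfadjoint (C j)" and CC: "(\<Sum>j\<in>J. C j o\<^sub>L C j) = id_blinfun"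
    and saX: "\<And>j. j \<in> J \<Longrightarrow> op_selfadjoint (X j)" and qX: "\<And>j. j \<in> J \<Longrightarrow> qlb (X j) a"
    and a: "0 < a"
  shows "op_le (\<Sum>j\<in>J. (C j o\<^sub>L op_fc ln (X j)) o\<^sub>L C j) (op_fc ln (\<Sum>j\<in>J. (C j o\<^sub>L X j) o\<^sub>L C j))"
proof -
  define W where "W = (\<Sum>j\<in>J. (C j o\<^sub>L X j) o\<^sub>L C j)"
  have saW: "op_selfadjoint W" unfolding W_def by (intro sa_sandwich_sum saC saX)
  have qW: "qlb W a" unfolding W_def by (rule sandwich_sum_qlb[OF saC CC qX])
  have step: "op_le (\<Sum>j\<in>J. (C j o\<^sub>L op_fc (RL M) (X j)) o\<^sub>L C j) (op_fc (RL M) W)" for M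
  proof -
    have "(\<Sum>j\<in>J. (C j o\<^sub>L op_fc (RL M) (X j)) o\<^sub>L C j)
        = (1 / real M) *\<^sub>R (\<Sum>k<M. \<Sum>j\<in>J. (C j o\<^sub>L op_fc (hh (real k / real M)) (X j)) o\<^sub>L C j)"
      by (simp add: RL_sum[OF saX qX a] oc_scale_left oc_scale_right oc_sum_left oc_sum_right
          scaleR_sum_right sum.swap[of _ "{..<M}"])
    also have "op_le \<dots> ((1 / real M) *\<^sub>R (\<Sum>k<M. op_fc (hh (real k / real M)) W))"
    proof (intro op_le_scale op_le_sum)
      fix k assume "k \<in> {..<M}"
      then have "0 \<le> real k / real M" "real k / real M \<le> 1" by (auto simp: divide_simps)
      then show "op_le (\<Sum>j\<in>J. (C j o\<^sub>L op_fc (hh (real k / real M)) (X j)) o\<^sub>L C j)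
                        (op_fc (hh (real k / real M)) W)"
        unfolding W_def using jensen_hh[where X=X and C=C and J=J and a=a, OF saC CC saX qX a] by blast
    qed simp
    also have "(1 / real M) *\<^sub>R (\<Sum>k<M. op_fc (hh (real k / real M)) W) = op_fc (RL M) W"
      by (simp add: RL_sum[OF saW qW a])
    finally show ?thesis .
  qed
  have L1: "(\<lambda>N. \<Sum>j\<in>J. (C j o\<^sub>L op_fc (RL (Suc N)) (X j)) o\<^sub>L C j) \<longlonglongrightarrow> (\<Sum>j\<in>J. (C j o\<^sub>L op_fc ln (X j)) o\<^sub>L C j)"
    by (intro tendsto_sum oc_tendsto tendsto_const RL_limit[OF saX qX a])
  have L2: "(\<lambda>N. op_fc (RL (Suc N)) W) \<longlonglongrightarrow> op_fc ln W" by (rule RL_limit[OF saW qW a])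
  show ?thesis using op_le_lim[OF L1 L2 step] by (simp add: W_def)
qed

lemma inv_pos_qlb:
  fixes X :: "'a::{real_inner,complete_space} \<Rightarrow>\<^sub>L 'a"
  assumes sa: "op_selfadjoint X" and q: "qlb X a" and a: "0 < a"
  shows "op_invertible X" "op_selfadjoint (op_inv X)" "\<exists>a'>0. qlb (op_inv X) a'"
proof -
  show inv: "op_invertible X" by (rule qlb_invertible[OF sa q a])
  show sai: "op_selfadjoint (op_inv X)" by (rule sa_inv[OF sa inv])
  have "op_pos (op_inv X)" unfolding op_pos_def
  proof (intro conjI allI sai)
    fix x
    have "inner (op_inv X x) x = inner (op_inv X x) (X (op_inv X x))" by (simp add: op_inv_apply inv)
    also have "\<dots> = inner (X (op_inv X x)) (op_inv X x)" by (simp add: inner_commute)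
    also have "\<dots> \<ge> a * (norm (op_inv X x))^2" using q by (simp add: qlb_def)
    finally show "0 \<le> inner (op_inv X x) x" using a by (meson order_trans zero_le_mult_iff zero_le_power2 less_imp_le)
  qed
  then show "\<exists>a'>0. qlb (op_inv X) a'" using pos_inv_qlb[OF _ invertible_inv[OF inv]] by (auto simp: qlb_def)
qed

lemma hh_inv:
  fixes X :: "'a::{real_inner,complete_space} \<Rightarrow>\<^sub>L 'a"
  assumes sa: "op_selfadjoint X" and q: "qlb X a" and a: "0 < a"
    and q': "qlb (op_inv X) a'" and a': "0 < a'" and u: "0 \<le> u" "u \<le> 1"
  shows "op_fc (hh u) (op_inv X) = - op_fc (hh (1 - u)) X"
proof -
  define K where "K = {a..norm X}"
  have sp: "op_spectrum X \<subseteq> K" unfolding K_def by (rule spec_qlb[OF sa q])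
  have cK: "compact K" by (simp add: K_def)
  have Kpos: "0 < t" if "t \<in> K" for t using that a by (simp add: K_def)
  have cinv: "continuous_on K (\<lambda>t. 1 / t)"
    by (intro continuous_intros) (use Kpos in \<open>auto simp: less_imp_neq[symmetric]\<close>)
  have tt: "t * (1 / t) = 1" if "t \<in> op_spectrum X" for t
    using Kpos[of t] that sp by force
  have Xi: "op_inv X = op_fc (\<lambda>t. 1 / t) X"
    using fc_inv(2)[OF sa sp cK continuous_on_id cinv tt] fc_id[OF sa sp cK] by simp
  note inv = inv_pos_qlb[OF sa q a]
  have E: "op_fc (hh u) (op_inv X) =
      (op_inv X - id_blinfun) o\<^sub>L op_inv (id_blinfun + u *\<^sub>R (op_inv X - id_blinfun))"
    by (rule E_formula(2)[OF inv(2) q' a' u])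
  have c1: "continuous_on K (\<lambda>t. 1 / t - 1)" by (intro continuous_intros cinv)
  have A: "op_inv X - id_blinfun = op_fc (\<lambda>t. 1 / t - 1) X"
    unfolding Xi using fc_diff[OF sa sp cK cinv continuous_on_const, of 1] fc_const[OF sa sp cK, of 1] by simp
  have Dp: "0 < 1 + u * (1 / t - 1)" if "t \<in> K" for t using Kpos[OF that] u by (intro denom_pos') auto
  have c2: "continuous_on K (\<lambda>t. u * (1 / t - 1))" by (intro continuous_intros c1)
  have cD: "continuous_on K (\<lambda>t. 1 + u * (1 / t - 1))" by (intro continuous_intros c1)
  have cG: "continuous_on K (\<lambda>t. 1 / (1 + u * (1 / t - 1)))"
    by (intro continuous_intros c1) (use Dp in \<open>auto simp: less_imp_neq[symmetric]\<close>)
  have B: "id_blinfun + u *\<^sub>R (op_inv X - id_blinfun) = op_fc (\<lambda>t. 1 + u * (1 / t - 1)) X"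
    unfolding A using fc_add[OF sa sp cK continuous_on_const c2, of 1] fc_const[OF sa sp cK, of 1]
      fc_scale[OF sa sp cK c1, of u] by simp
  have DG: "(1 + u * (1 / t - 1)) * (1 / (1 + u * (1 / t - 1))) = 1" if "t \<in> op_spectrum X" for t
    using Dp[of t] that sp by auto
  have C: "op_inv (id_blinfun + u *\<^sub>R (op_inv X - id_blinfun)) = op_fc (\<lambda>t. 1 / (1 + u * (1 / t - 1))) X"
    unfolding B by (rule fc_inv(2)[OF sa sp cK cD cG DG])
  have "op_fc (hh u) (op_inv X) = op_fc (\<lambda>t. (1 / t - 1) * (1 / (1 + u * (1 / t - 1)))) X"
    unfolding E unfolding C unfolding A by (rule fc_mult[OF sa sp cK c1 cG, symmetric])
  also have "\<dots> = op_fc (\<lambda>t. - hh (1 - u) t) X"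
  proof (rule fc_cong[OF sa sp cK])
    fix t assume "t \<in> op_spectrum X"
    then have t: "t \<in> K" using sp by auto
    have t0: "0 < t" by (rule Kpos[OF t])
    have d1: "0 < 1 + (1 - u) * (t - 1)" using t0 u by (intro denom_pos') auto
    have d2: "0 < 1 + u * (1 / t - 1)" by (rule Dp[OF t])
    have d3: "1 + u * (1 / t - 1) = (1 + (1 - u) * (t - 1)) / t" using t0 by (simp add: field_simps)
    define E where "E = 1 + (1 - u) * (t - 1)"
    have E0: "0 < E" using d1 by (simp add: E_def)
    have "(1 / t - 1) * (1 / (1 + u * (1 / t - 1))) = (1 / t - 1) * (1 / (E / t))"
      unfolding d3 E_def ..
    also have "\<dots> = (1 - t) / E" using t0 E0 by (simp add: field_simps)
    also have "\<dots> = - hh (1 - u) t" unfolding hh_def E_def by (simp add: minus_divide_left)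
    finally show "(1 / t - 1) * (1 / (1 + u * (1 / t - 1))) = - hh (1 - u) t" .
  qed
  also have "\<dots> = - op_fc (hh (1 - u)) X"
    by (rule fc_minus[OF sa sp cK]) (unfold K_def, rule cont_hh, use u a in auto)
  finally show ?thesis .
qed

lemma ln_inv:
  fixes X :: "'a::{real_inner,complete_space} \<Rightarrow>\<^sub>L 'a"
  assumes sa: "op_selfadjoint X" and q: "qlb X a" and a: "0 < a"
  shows "op_fc ln (op_inv X) = - op_fc ln X"
proof -
  note inv = inv_pos_qlb[OF sa q a]
  obtain a' where a': "0 < a'" "qlb (op_inv X) a'" using inv(3) by blast
  have eq: "op_fc (RL (Suc N)) (op_inv X) = - op_fc (RR (Suc N)) X" for N
  proof -
    define M where "M = Suc N"
    have "op_fc (RL M) (op_inv X) = (1 / real M) *\<^sub>R (\<Sum>k<M. op_fc (hh (real k / real M)) (op_inv X))"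
      by (rule RL_sum[OF inv(2) a'(2) a'(1)])
    also have "(\<Sum>k<M. op_fc (hh (real k / real M)) (op_inv X)) = (\<Sum>k<M. - op_fc (hh (1 - real k / real M)) X)"
      by (intro sum.cong refl hh_inv[OF sa q a a'(2) a'(1)]) (auto simp: divide_simps M_def)
    also have "\<dots> = - (\<Sum>k<M. op_fc (hh (real (Suc k) / real M)) X)"
    proof -
      have "(\<Sum>k<M. op_fc (hh (real (Suc k) / real M)) X) = (\<Sum>i<M. op_fc (hh (real (Suc (M - Suc i)) / real M)) X)"
        by (rule sum.nat_diff_reindex[symmetric])
      also have "\<dots> = (\<Sum>i<M. op_fc (hh (1 - real i / real M)) X)"
      proof (rule sum.cong[OF refl])
        fix i assume "i \<in> {..<M}"
        then have "real (Suc (M - Suc i)) / real M = 1 - real i / real M"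
          by (auto simp: of_nat_diff divide_simps M_def)
        then show "op_fc (hh (real (Suc (M - Suc i)) / real M)) X = op_fc (hh (1 - real i / real M)) X" by simp
      qed
      finally show ?thesis by (simp add: sum_negf)
    qed
    also have "(1 / real M) *\<^sub>R (- (\<Sum>k<M. op_fc (hh (real (Suc k) / real M)) X)) = - op_fc (RR M) X"
      by (simp add: RR_sum[OF sa q a])
    finally show ?thesis by (simp add: M_def)
  qed
  have L1: "(\<lambda>N. op_fc (RL (Suc N)) (op_inv X)) \<longlonglongrightarrow> op_fc ln (op_inv X)"
    by (rule RL_limit[OF inv(2) a'(2) a'(1)])
  have L2: "(\<lambda>N. - op_fc (RR (Suc N)) X) \<longlonglongrightarrow> - op_fc ln X"
    by (intro tendsto_minus RR_limit[OF sa q a])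
  show ?thesis using L1 L2 eq LIMSEQ_unique by (metis (no_types, lifting) ext)
qed

lemma sq1_pos: "0 < (x::real)^2 + 1"
  by (intro add_nonneg_pos) auto

lemma common_qlb:
  assumes "finite J" "\<And>j. j \<in> J \<Longrightarrow> \<exists>c>0. qlb (X j) c"
  shows "\<exists>c>0. \<forall>j\<in>J. qlb (X j) c"
  using assms
proof (induct J rule: finite_induct)
  case empty then show ?case by (intro exI[of _ 1]) auto
next
  case (insert i J)
  obtain c1 where c1: "c1 > 0" "qlb (X i) c1" using insert by auto
  obtain c2 where c2: "c2 > 0" "\<forall>j\<in>J. qlb (X j) c2" using insert by auto
  have "min c1 c2 > 0" using c1 c2 by simp
  moreover have "\<forall>j\<in>insert i J. qlb (X j) (min c1 c2)"
    using c1 c2 qlb_mono by (metis insert_iff min.cobounded1 min.cobounded2)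
  ultimately show ?case by blast
qed

lemma sqrt_facts:
  fixes A :: "'a::{real_inner,complete_space} \<Rightarrow>\<^sub>L 'a"
  assumes sa: "op_selfadjoint A" and q: "qlb A a" and a: "0 < a"
  shows "op_selfadjoint (op_fc (\<lambda>t. t powr (1/2)) A)" "op_selfadjoint (op_fc (\<lambda>t. t powr (-1/2)) A)"
    "op_fc (\<lambda>t. t powr (1/2)) A o\<^sub>L op_fc (\<lambda>t. t powr (1/2)) A = A"
    "op_fc (\<lambda>t. t powr (1/2)) A o\<^sub>L op_fc (\<lambda>t. t powr (-1/2)) A = id_blinfun"
    "op_fc (\<lambda>t. t powr (-1/2)) A o\<^sub>L op_fc (\<lambda>t. t powr (1/2)) A = id_blinfun"
proof -
  define K where "K = {a..norm A}"
  have sp: "op_spectrum A \<subseteq> K" unfolding K_def by (rule spec_qlb[OF sa q])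
  have cK: "compact K" by (simp add: K_def)
  have Kpos: "0 < t" if "t \<in> K" for t using that a by (simp add: K_def)
  have cp: "continuous_on K (\<lambda>t. t powr r)" for r
    by (intro continuous_on_powr continuous_intros) (use Kpos in \<open>auto simp: less_imp_neq[symmetric]\<close>)
  show "op_selfadjoint (op_fc (\<lambda>t. t powr (1/2)) A)" by (rule fc_sa[OF sa sp cK cp])
  show "op_selfadjoint (op_fc (\<lambda>t. t powr (-1/2)) A)" by (rule fc_sa[OF sa sp cK cp])
  have "op_fc (\<lambda>t. t powr (1/2)) A o\<^sub>L op_fc (\<lambda>t. t powr (1/2)) A = op_fc (\<lambda>t. t powr (1/2) * t powr (1/2)) A"
    by (rule fc_mult[OF sa sp cK cp cp, symmetric])
  also have "\<dots> = op_fc (\<lambda>t. t) A"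
  proof (rule fc_cong[OF sa sp cK])
    fix t assume "t \<in> op_spectrum A"
    then have "0 < t" using sp Kpos by auto
    then show "t powr (1/2) * t powr (1/2) = t" by (simp add: powr_add[symmetric])
  qed
  also have "\<dots> = A" by (rule fc_id[OF sa sp cK])
  finally show "op_fc (\<lambda>t. t powr (1/2)) A o\<^sub>L op_fc (\<lambda>t. t powr (1/2)) A = A" .
  have "op_fc (\<lambda>t. t powr (1/2)) A o\<^sub>L op_fc (\<lambda>t. t powr (-1/2)) A = op_fc (\<lambda>t. t powr (1/2) * t powr (-1/2)) A"
    by (rule fc_mult[OF sa sp cK cp cp, symmetric])
  also have "\<dots> = op_fc (\<lambda>t. 1) A"
  proof (rule fc_cong[OF sa sp cK])
    fix t assume "t \<in> op_spectrum A"
    then have "0 < t" using sp Kpos by auto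
    then show "t powr (1/2) * t powr (-1/2) = 1" by (simp add: powr_add[symmetric])
  qed
  also have "\<dots> = id_blinfun" using fc_const[OF sa sp cK, of 1] by simp
  finally show "op_fc (\<lambda>t. t powr (1/2)) A o\<^sub>L op_fc (\<lambda>t. t powr (-1/2)) A = id_blinfun" .
  have "op_fc (\<lambda>t. t powr (-1/2)) A o\<^sub>L op_fc (\<lambda>t. t powr (1/2)) A = op_fc (\<lambda>t. t powr (-1/2) * t powr (1/2)) A"
    by (rule fc_mult[OF sa sp cK cp cp, symmetric])
  also have "\<dots> = op_fc (\<lambda>t. 1) A"
  proof (rule fc_cong[OF sa sp cK])
    fix t assume "t \<in> op_spectrum A"
    then have "0 < t" using sp Kpos by auto
    then show "t powr (-1/2) * t powr (1/2) = 1" by (simp add: powr_add[symmetric])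
  qed
  also have "\<dots> = id_blinfun" using fc_const[OF sa sp cK, of 1] by simp
  finally show "op_fc (\<lambda>t. t powr (-1/2)) A o\<^sub>L op_fc (\<lambda>t. t powr (1/2)) A = id_blinfun" .
qed

lemma sandwich_qlb_inv:
  fixes B C D :: "'a::real_inner \<Rightarrow>\<^sub>L 'a"
  assumes saD: "op_selfadjoint D" and qB: "qlb B b" and b: "0 < b" and CD: "C o\<^sub>L D = id_blinfun"
  shows "qlb ((D o\<^sub>L B) o\<^sub>L D) (b / ((norm C)^2 + 1))"
  unfolding qlb_def
proof
  fix x
  have CDx: "C (D x) = x" using CD by (metis blinfun_apply_blinfun_compose blinfun_apply_id_blinfun)
  have "norm x \<le> norm C * norm (D x)" using norm_blinfun[of C "D x"] CDx by simp
  then have "(norm x)^2 \<le> (norm C * norm (D x))^2" by (intro power_mono) auto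
  also have "\<dots> \<le> ((norm C)^2 + 1) * (norm (D x))^2" by (simp add: power_mult_distrib algebra_simps)
  finally have nx: "(norm x)^2 \<le> ((norm C)^2 + 1) * (norm (D x))^2" .
  have "b / ((norm C)^2 + 1) * (norm x)^2 \<le> b / ((norm C)^2 + 1) * (((norm C)^2 + 1) * (norm (D x))^2)"
    using nx b by (intro mult_left_mono) auto
  also have "\<dots> = b * (norm (D x))^2"
  proof -
    have "(norm C)^2 + 1 \<noteq> 0" using sq1_pos[of "norm C"] by linarith
    then show ?thesis by simp
  qed
  also have "\<dots> \<le> inner (B (D x)) (D x)" using qB by (simp add: qlb_def)
  also have "\<dots> = inner (((D o\<^sub>L B) o\<^sub>L D) x) x" using saD unfolding op_selfadjoint_def by simp
  finally show "b / ((norm C)^2 + 1) * (norm x)^2 \<le> inner (((D o\<^sub>L B) o\<^sub>L D) x) x" .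
qed

lemma ln_id:
  shows "op_fc ln (id_blinfun :: 'a::{real_inner,complete_space} \<Rightarrow>\<^sub>L 'a) = 0"
proof -
  have sp: "op_spectrum (id_blinfun :: 'a \<Rightarrow>\<^sub>L 'a) \<subseteq> {1..1}"
    by (rule spec_bound) (simp_all add: power2_norm_eq_inner)
  have "op_fc ln (id_blinfun :: 'a \<Rightarrow>\<^sub>L 'a) = op_fc (\<lambda>t. 0) id_blinfun"
    by (rule fc_cong[OF sa_id sp compact_Icc]) (use sp in auto)
  also have "\<dots> = 0" using fc_const[OF sa_id sp compact_Icc, of 0] by simp
  finally show ?thesis .
qed

theorem corollary1:
  fixes A B :: "nat \<Rightarrow> ('a::{real_inner, complete_space} \<Rightarrow>\<^sub>L 'a)" and n :: nat
  assumes "\<forall>j<n. op_strictly_pos (A j)"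
    and "\<forall>j<n. op_strictly_pos (B j)"
    and "(\<Sum>j<n. A j) = id_blinfun"
    and "(\<Sum>j<n. B j) = id_blinfun"
  shows "op_le (\<Sum>j<n. op_fc (\<lambda>t. t powr (1/2)) (A j) o\<^sub>L
              (op_fc ln ((op_fc (\<lambda>t. t powr (-1/2)) (A j) o\<^sub>L B j) o\<^sub>L op_fc (\<lambda>t. t powr (-1/2)) (A j))
               o\<^sub>L op_fc (\<lambda>t. t powr (1/2)) (A j))) 0
       \<and> op_le (- op_fc ln (\<Sum>j<n. (A j o\<^sub>L op_inv (B j)) o\<^sub>L A j))
              (\<Sum>j<n. op_fc (\<lambda>t. t powr (1/2)) (A j) o\<^sub>L
              (op_fc ln ((op_fc (\<lambda>t. t powr (-1/2)) (A j) o\<^sub>L B j) o\<^sub>L op_fc (\<lambda>t. t powr (-1/2)) (A j))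
               o\<^sub>L op_fc (\<lambda>t. t powr (1/2)) (A j)))"
proof -
  define J where "J = {..<n}"
  have fin: "finite J" by (simp add: J_def)
  define C where "C j = op_fc (\<lambda>t. t powr (1/2)) (A j)" for j
  define D where "D j = op_fc (\<lambda>t. t powr (-1/2)) (A j)" for j
  define X where "X j = (D j o\<^sub>L B j) o\<^sub>L D j" for j
  define X' where "X' j = (C j o\<^sub>L op_inv (B j)) o\<^sub>L C j" for j
  have saA: "op_selfadjoint (A j)" "op_pos (A j)" "op_invertible (A j)" if "j \<in> J" for j
    using assms(1) that by (auto simp: J_def op_strictly_pos_def op_pos_def)
  have saB: "op_selfadjoint (B j)" "op_pos (B j)" "op_invertible (B j)" if "j \<in> J" for j
    using assms(2) that by (auto simp: J_def op_strictly_pos_def op_pos_def)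
  obtain a where a: "0 < a" "\<forall>j\<in>J. qlb (A j) a"
    using common_qlb[OF fin, of A] pos_inv_qlb saA by (metis qlb_def)
  obtain b where b: "0 < b" "\<forall>j\<in>J. qlb (B j) b"
    using common_qlb[OF fin, of B] pos_inv_qlb saB by (metis qlb_def)
  have sq: "op_selfadjoint (op_fc (\<lambda>t. t powr (1/2)) (A j))" "op_selfadjoint (op_fc (\<lambda>t. t powr (-1/2)) (A j))"
    "op_fc (\<lambda>t. t powr (1/2)) (A j) o\<^sub>L op_fc (\<lambda>t. t powr (1/2)) (A j) = A j"
    "op_fc (\<lambda>t. t powr (1/2)) (A j) o\<^sub>L op_fc (\<lambda>t. t powr (-1/2)) (A j) = id_blinfun"
    "op_fc (\<lambda>t. t powr (-1/2)) (A j) o\<^sub>L op_fc (\<lambda>t. t powr (1/2)) (A j) = id_blinfun"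
    if "j \<in> J" for j
    using sqrt_facts[OF saA(1)[OF that] bspec[OF a(2) that] a(1)] by auto
  have saC: "op_selfadjoint (C j)" if "j \<in> J" for j using sq(1)[OF that] by (simp add: C_def)
  have saD: "op_selfadjoint (D j)" if "j \<in> J" for j using sq(2)[OF that] by (simp add: D_def)
  have CC: "C j o\<^sub>L C j = A j" if "j \<in> J" for j using sq(3)[OF that] by (simp add: C_def)
  have CD: "C j o\<^sub>L D j = id_blinfun" if "j \<in> J" for j using sq(4)[OF that] by (simp add: C_def D_def)
  have DC: "D j o\<^sub>L C j = id_blinfun" if "j \<in> J" for j using sq(5)[OF that] by (simp add: C_def D_def)
  have CDx: "C j (D j x) = x" "D j (C j x) = x" "C j (C j x) = A j x" if "j \<in> J" for j x
    using CD[OF that] DC[OF that] CC[OF that] by (metis blinfun_apply_blinfun_compose blinfun_apply_id_blinfun)+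
  have Binv: "op_inv (B j) (B j x) = x" "B j (op_inv (B j) x) = x" if "j \<in> J" for j x
    using op_inv_apply[OF saB(3)[OF that]] by auto
  have sumCC: "(\<Sum>j\<in>J. C j o\<^sub>L C j) = id_blinfun" using assms(3) CC by (simp add: J_def)
  have saX: "op_selfadjoint (X j)" if "j \<in> J" for j unfolding X_def by (intro sa_sandwich saD saB that)
  have qX: "\<exists>c>0. qlb (X j) c" if "j \<in> J" for j
    using sandwich_qlb_inv[OF saD[OF that] bspec[OF b(2) that] b(1) CD[OF that]] b(1)
    unfolding X_def by (intro exI[of _ "b / ((norm (C j))^2 + 1)"]) (auto intro: divide_pos_pos sq1_pos)
  obtain cX where cX: "0 < cX" "\<forall>j\<in>J. qlb (X j) cX" using common_qlb[where X=X, OF fin qX] by blast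
  have Bi: "op_selfadjoint (op_inv (B j))" "\<exists>c>0. qlb (op_inv (B j)) c" if "j \<in> J" for j
    using inv_pos_qlb[OF saB(1)[OF that] bspec[OF b(2) that] b(1)] by auto
  have saX': "op_selfadjoint (X' j)" if "j \<in> J" for j unfolding X'_def by (intro sa_sandwich saC Bi that)
  have qX': "\<exists>c>0. qlb (X' j) c" if jJ: "j \<in> J" for j
  proof -
    obtain c where c: "0 < c" "qlb (op_inv (B j)) c" using Bi(2)[OF jJ] by blast
    show ?thesis
      using sandwich_qlb_inv[OF saC[OF jJ] c(2) c(1) DC[OF jJ]] c(1)
      unfolding X'_def by (intro exI[of _ "c / ((norm (D j))^2 + 1)"]) (auto intro: divide_pos_pos sq1_pos)
  qed
  obtain cX' where cX': "0 < cX'" "\<forall>j\<in>J. qlb (X' j) cX'" using common_qlb[where X=X', OF fin qX'] by blast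
  have invX: "op_inv (X j) = X' j" if "j \<in> J" for j
  proof (rule op_inv_eq)
    show "X' j o\<^sub>L X j = id_blinfun"
      by (rule blinfun_eqI) (simp add: X_def X'_def CDx[OF that] Binv[OF that])
    show "X j o\<^sub>L X' j = id_blinfun"
      by (rule blinfun_eqI) (simp add: X_def X'_def CDx[OF that] Binv[OF that])
  qed
  have sumX: "(\<Sum>j\<in>J. (C j o\<^sub>L X j) o\<^sub>L C j) = id_blinfun"
  proof -
    have "(\<Sum>j\<in>J. (C j o\<^sub>L X j) o\<^sub>L C j) = (\<Sum>j\<in>J. B j)"
    proof (rule sum.cong[OF refl])
      fix j assume j: "j \<in> J"
      show "(C j o\<^sub>L X j) o\<^sub>L C j = B j" by (rule blinfun_eqI) (simp add: X_def CDx[OF j])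
    qed
    then show ?thesis using assms(4) by (simp add: J_def)
  qed
  have sumX': "(\<Sum>j\<in>J. (C j o\<^sub>L X' j) o\<^sub>L C j) = (\<Sum>j<n. (A j o\<^sub>L op_inv (B j)) o\<^sub>L A j)"
    unfolding J_def
  proof (rule sum.cong[OF refl])
    fix j assume j: "j \<in> {..<n}"
    then have j': "j \<in> J" by (simp add: J_def)
    show "(C j o\<^sub>L X' j) o\<^sub>L C j = (A j o\<^sub>L op_inv (B j)) o\<^sub>L A j"
      by (rule blinfun_eqI) (simp add: X'_def CDx[OF j'])
  qed
  have J1: "op_le (\<Sum>j\<in>J. (C j o\<^sub>L op_fc ln (X j)) o\<^sub>L C j) 0"
    using jensen_ln[where X=X and C=C and J=J and a=cX, OF fin saC sumCC saX _ cX(1)] cX(2) sumX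
    by (simp add: ln_id)
  have J2: "op_le (\<Sum>j\<in>J. (C j o\<^sub>L op_fc ln (X' j)) o\<^sub>L C j) (op_fc ln (\<Sum>j<n. (A j o\<^sub>L op_inv (B j)) o\<^sub>L A j))"
    using jensen_ln[where X=X' and C=C and J=J and a=cX', OF fin saC sumCC saX' _ cX'(1)] cX'(2) sumX'
    by simp
  have lnX': "op_fc ln (X' j) = - op_fc ln (X j)" if "j \<in> J" for j
    using ln_inv[OF saX[OF that] bspec[OF cX(2) that] cX(1)] invX[OF that] by simp
  have "(\<Sum>j\<in>J. (C j o\<^sub>L op_fc ln (X' j)) o\<^sub>L C j) = - (\<Sum>j\<in>J. (C j o\<^sub>L op_fc ln (X j)) o\<^sub>L C j)"
    by (simp add: lnX' oc_minus_left oc_minus_right sum_negf)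
  with J2 have J2': "op_le (- op_fc ln (\<Sum>j<n. (A j o\<^sub>L op_inv (B j)) o\<^sub>L A j)) (\<Sum>j\<in>J. (C j o\<^sub>L op_fc ln (X j)) o\<^sub>L C j)"
    using op_le_neg by fastforce
  show ?thesis using J1 J2' unfolding J_def C_def D_def X_def by (simp add: oc_assoc)
qed


end
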